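(* Let $k\in[n-1]$ and $w\in S_n^{k\searrow}$. Let $C_1$ be an increasing $k$-chain from $u$ to $v$ and $C_2$ an increasing $1$-chain from $v$ to $w$. Apply Lenart's growth diagram to $(k,1,C_1,C_2)$, obtaining a saturated $1$-chain $C_2'$ from $u$ to some $v'$ and a saturated $k$-chain $C_1'$ from $v'$ to $w$. Then $C_2'$ is an increasing $1$-chain and $C_1'$ is an increasing $k$-chain.
   Context: Permutations in one-line notation; $wt_{i,j}$ is $w$ with positions $i<j$ swapped; $\ell$ the number of inversions. $u\lessdot w$ iff $w=ut_{i,j}$, $i<j$, $\ell(w)=\ell(u)+1$; $u\lessdot_k w$ iff moreover $i\le k<j$. A saturated $k$-chain is $v_1\lessdot_k\cdots\lessdot_k v_d$ ($d\ge1$), of length $d-1$; it is increasing if the smaller of the two values exchanged at each step strictly increases along the chain. $S_n^{k\searrow}=\{v:v(k+1)>\dots>v(n)\}$. Lenart's growth diagram: given $k_1,k_2\in[n-1]$, a saturated $k_1$-chain $C_1$ from $u$ to $v$ and a saturated $k_2$-chain $C_2$ from $v$ to $w$, write the concatenated chain with each step labelled $k_1$ or $k_2$. A local move applies to a segment $a\xrightarrow{k_1}b\xrightarrow{k_2}c$ (with $a\lessdot_{k_1}b\lessdot_{k_2}c$): there is a unique $b'\ne b$ with $a\lessdot b'\lessdot c$; if $a\lessdot_{k_2}b'\lessdot_{k_1}c$, replace the segment by $a\xrightarrow{k_2}b'\xrightarrow{k_1}c$; otherwise (then $a\lessdot_{k_2}b\lessdot_{k_1}c$) replace it by $a\xrightarrow{k_2}b\xrightarrow{k_1}c$.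 Apply local moves until all $k_2$-labelled steps precede all $k_1$-labelled steps; the output is the resulting saturated $k_2$-chain from $u$ to some $v'$ (same length as $C_2$) and saturated $k_1$-chain from $v'$ to $w$ (same length as $C_1$). The output does not depend on the order of moves. *)

theory Defs
  imports Main
begin

text \<open>Permutations of [n] in one-line notation are lists w of length n with
  set w = {1..n}; list index p (0-based) is position p+1.\<close>

definition is_perm :: "nat \<Rightarrow> nat list \<Rightarrow> bool" where
  "is_perm n w \<longleftrightarrow> length w = n \<and> set w = {1..n}"

text \<open>w t_{i+1,j+1}: swap the entries at 0-based list indices i and j.\<close>
definition swap_pos :: "nat list \<Rightarrow> nat \<Rightarrow> nat \<Rightarrow> nat list" where
  "swap_pos w i j = w[i := w ! j, j := w ! i]"

definition inv_num :: "nat list \<Rightarrow> nat" where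
  "inv_num w = card {(i, j). i < j \<and> j < length w \<and> w ! i > w ! j}"

definition covers :: "nat \<Rightarrow> nat list \<Rightarrow> nat list \<Rightarrow> bool" where
  "covers n u w \<longleftrightarrow> is_perm n u \<and>
     (\<exists>i j. i < j \<and> j < n \<and> w = swap_pos u i j \<and> inv_num w = inv_num u + 1)"

text \<open>u \<lessdot>_k w: positions (1-based) i' \<le> k < j', i.e. 0-based i < k \<le> j.\<close>
definition kcovers :: "nat \<Rightarrow> nat \<Rightarrow> nat list \<Rightarrow> nat list \<Rightarrow> bool" where
  "kcovers n k u w \<longleftrightarrow> is_perm n u \<and>
     (\<exists>i j. i < k \<and> k \<le> j \<and> j < n \<and> w = swap_pos u i j \<and> inv_num w = inv_num u + 1)"

definition kchain :: "nat \<Rightarrow> nat \<Rightarrow> nat list list \<Rightarrow> bool" where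
  "kchain n k C \<longleftrightarrow> C \<noteq> [] \<and> is_perm n (hd C) \<and>
     (\<forall>i. i + 1 < length C \<longrightarrow> kcovers n k (C ! i) (C ! (i + 1)))"

definition exch_min :: "nat list \<Rightarrow> nat list \<Rightarrow> nat" where
  "exch_min u w = Min {u ! p | p. p < length u \<and> u ! p \<noteq> w ! p}"

definition increasing_chain :: "nat list list \<Rightarrow> bool" where
  "increasing_chain C \<longleftrightarrow>
     (\<forall>i. i + 2 < length C \<longrightarrow> exch_min (C ! i) (C ! (i + 1)) < exch_min (C ! (i + 1)) (C ! (i + 2)))"

definition S_dec :: "nat \<Rightarrow> nat \<Rightarrow> nat list set" where
  "S_dec n k = {v. is_perm n v \<and> (\<forall>i j. k \<le> i \<and> i < j \<and> j < n \<longrightarrow> v ! i > v ! j)}"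

text \<open>Step labels: L1 = step labelled k1 (from C_1), L2 = step labelled k2 (from C_2).
  Labelled chain: list of permutations vs and labels ts, length vs = length ts + 1.\<close>
datatype lab = L1 | L2

definition local_move :: "nat \<Rightarrow> nat \<Rightarrow> nat \<Rightarrow> nat list list \<times> lab list \<Rightarrow> nat list list \<times> lab list \<Rightarrow> bool" where
  "local_move n k1 k2 X Y \<longleftrightarrow>
    (let vs = fst X; ts = snd X; vs' = fst Y; ts' = snd Y in
     \<exists>p. p + 1 < length ts \<and> length vs = length ts + 1 \<and>
       ts ! p = L1 \<and> ts ! (p + 1) = L2 \<and> ts' = ts[p := L2, p + 1 := L1] \<and>
       (let a = vs ! p; b = vs ! (p + 1); c = vs ! (p + 2) in
         kcovers n k1 a b \<and> kcovers n k2 b c \<and>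
         ((\<exists>b'. b' \<noteq> b \<and> covers n a b' \<and> covers n b' c \<and>
                kcovers n k2 a b' \<and> kcovers n k1 b' c \<and> vs' = vs[p + 1 := b'])
          \<or> ((\<forall>b'. b' \<noteq> b \<and> covers n a b' \<and> covers n b' c \<longrightarrow>
                  \<not> (kcovers n k2 a b' \<and> kcovers n k1 b' c)) \<and> vs' = vs))))"

text \<open>Growth diagram output: (C2', C1') is an output of Lenart's growth diagram on
  (k1, k2, C1, C2) if it is reached from the concatenated labelled chain by local moves
  and all k2-labelled steps precede all k1-labelled steps.\<close>
definition growth_output :: "nat \<Rightarrow> nat \<Rightarrow> nat \<Rightarrow> nat list list \<Rightarrow> nat list list
     \<Rightarrow> nat list list \<Rightarrow> nat list list \<Rightarrow> bool" where
  "growth_output n k1 k2 C1 C2 C2' C1' \<longleftrightarrow>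
    (\<exists>vs. (local_move n k1 k2)\<^sup>*\<^sup>*
             (C1 @ tl C2, replicate (length C1 - 1) L1 @ replicate (length C2 - 1) L2)
             (vs, replicate (length C2 - 1) L2 @ replicate (length C1 - 1) L1)
          \<and> C2' = take (length C2) vs \<and> C1' = drop (length C2 - 1) vs)"

end

theory Submission
  imports Defs
begin


definition tp :: "nat \<Rightarrow> nat \<Rightarrow> nat \<Rightarrow> nat" where
  "tp x y p = (if p = x then y else if p = y then x else p)"

lemma length_swap[simp]: "length (swap_pos w i j) = length w"
  by (simp add: swap_pos_def)

lemma nth_swap:
  assumes "i < length w" "j < length w"
  shows "swap_pos w i j ! p = (if p = j then w ! i else if p = i then w ! j else w ! p)"
  using assms by (simp add: swap_pos_def nth_list_update)

lemma nth_swap_tp: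
  assumes "i < length w" "j < length w"
  shows "swap_pos w i j ! p = w ! (tp i j p)"
  using assms by (auto simp: nth_swap tp_def)

lemma is_perm_distinct: "is_perm n w \<Longrightarrow> distinct w"
  unfolding is_perm_def by (simp add: card_distinct)

lemma is_perm_nth_inj:
  assumes "is_perm n w" "p < n" "q < n" "w ! p = w ! q" shows "p = q"
  using assms is_perm_distinct[OF assms(1)] by (auto simp: is_perm_def nth_eq_iff_index_eq)

lemma set_swap_pos: assumes "i < length w" "j < length w" shows "set (swap_pos w i j) = set w"
  using assms unfolding swap_pos_def by simp

lemma is_perm_swap: "is_perm n w \<Longrightarrow> i < n \<Longrightarrow> j < n \<Longrightarrow> is_perm n (swap_pos w i j)"
  unfolding is_perm_def using set_swap_pos by auto

lemma swap_eq_iff: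
  assumes "length u = n" "length w = n"
  shows "u = w \<longleftrightarrow> (\<forall>p<n. u ! p = w ! p)"
  using assms by (auto simp: list_eq_iff_nth_eq)


definition invs :: "nat \<Rightarrow> (nat \<Rightarrow> nat) \<Rightarrow> (nat \<times> nat) set" where
  "invs N f = {(p,q). p < q \<and> q < N \<and> f q < f p}"

lemma finite_invs[simp]: "finite (invs N f)"
  by (rule finite_subset[of _ "{..<N} \<times> {..<N}"]) (auto simp: invs_def)

definition Ypart :: "nat \<Rightarrow> (nat \<Rightarrow> nat) \<Rightarrow> nat \<Rightarrow> nat \<Rightarrow> (nat \<times> nat) set" where
  "Ypart N h x r = {pq \<in> invs N h. pq = (r,x) \<or> pq = (x,r)}"

definition ind :: "bool \<Rightarrow> nat" where "ind b = (if b then 1 else 0)"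

lemma card_Ypart:
  assumes "r < N" "x < N" "r \<noteq> x"
  shows "card (Ypart N h x r) = (if r < x then ind (h x < h r) else ind (h r < h x))"
proof -
  have "Ypart N h x r = (if r < x then (if h x < h r then {(r,x)} else {}) else (if h r < h x then {(x,r)} else {}))"
    using assms by (auto simp: Ypart_def invs_def)
  thus ?thesis by (simp add: ind_def)
qed

lemma fY: "finite (Ypart N h x r)"
    by (rule finite_subset[OF _ finite_invs[of N h]]) (auto simp: Ypart_def)

lemma t1: 
  assumes "i < j" "j < N"
  shows "invs N h = {(p,q) \<in> invs N h. p \<noteq> i \<and> p \<noteq> j \<and> q \<noteq> i \<and> q \<noteq> j} \<union> ({(p,q) \<in> invs N h. p = i \<and> q = j} \<union> 
    (\<Union>r\<in>{r. r < N \<and> r \<noteq> i \<and> r \<noteq> j}. Ypart N h i r \<union> Ypart N h j r))"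
proof (rule set_eqI)
  fix pq :: "nat \<times> nat"
  obtain p q where pq: "pq = (p,q)" by fastforce
  show "pq \<in> invs N h \<longleftrightarrow> pq \<in> {(p,q) \<in> invs N h. p \<noteq> i \<and> p \<noteq> j \<and> q \<noteq> i \<and> q \<noteq> j} \<union> ({(p,q) \<in> invs N h. p = i \<and> q = j} \<union> 
    (\<Union>r\<in>{r. r < N \<and> r \<noteq> i \<and> r \<noteq> j}. Ypart N h i r \<union> Ypart N h j r))" (is "_ \<longleftrightarrow> pq \<in> ?RHS")
  proof
    assume h: "pq \<in> invs N h"
    hence pqN: "p < q" "q < N" using pq by (auto simp: invs_def)
    consider "p \<noteq> i \<and> p \<noteq> j \<and> q \<noteq> i \<and> q \<noteq> j" | "p = i \<and> q = j" | "p = i \<and> q \<noteq> j" | "p = j" | "q = i" | "q = j \<and> p \<noteq> i"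
      by blast
    thus "pq \<in> ?RHS"
    proof cases
      case 3 thus ?thesis using h pq pqN by (auto simp: Ypart_def)
    next
      case 4 thus ?thesis using h pq pqN assms by (auto simp: Ypart_def)
    next
      case 5 thus ?thesis using h pq pqN assms by (auto simp: Ypart_def)
    next
      case 6 thus ?thesis using h pq pqN assms by (auto simp: Ypart_def)
    qed (use h pq in auto)
  qed (auto simp: Ypart_def)
qed

lemma invs_decomp:
  assumes "i < j" "j < N"
  shows "card (invs N h) = card {(p,q) \<in> invs N h. p \<noteq> i \<and> p \<noteq> j \<and> q \<noteq> i \<and> q \<noteq> j}
     + ind (h j < h i) + (\<Sum>r\<in>{r. r < N \<and> r \<noteq> i \<and> r \<noteq> j}. card (Ypart N h i r) + card (Ypart N h j r))"
proof -
  define R where "R = {r. r < N \<and> r \<noteq> i \<and> r \<noteq> j}"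
  let ?O = "{(p,q) \<in> invs N h. p \<noteq> i \<and> p \<noteq> j \<and> q \<noteq> i \<and> q \<noteq> j}"
  let ?P = "{(p,q) \<in> invs N h. p = i \<and> q = j}"
  let ?U = "\<Union>r\<in>R. Ypart N h i r \<union> Ypart N h j r"
  have fR: "finite R" unfolding R_def by auto
  have eq: "invs N h = ?O \<union> (?P \<union> ?U)"
    using t1[OF assms, of h] unfolding R_def .
  have d1: "?O \<inter> (?P \<union> ?U) = {}"
    by (auto simp: Ypart_def)
  have d2: "?P \<inter> ?U = {}"
    using assms by (auto simp: Ypart_def R_def)
  have cP: "card ?P = ind (h j < h i)"
  proof -
    have "?P = (if h j < h i then {(i,j)} else {})" using assms by (auto simp: invs_def)
    thus ?thesis by (simp add: ind_def)
  qed
  have cU: "card ?U = (\<Sum>r\<in>R. card (Ypart N h i r \<union> Ypart N h j r))"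
  proof (rule card_UN_disjoint[OF fR])
    show "\<forall>r\<in>R. finite (Ypart N h i r \<union> Ypart N h j r)" by (simp add: fY)
    show "\<forall>r\<in>R. \<forall>r'\<in>R. r \<noteq> r' \<longrightarrow> (Ypart N h i r \<union> Ypart N h j r) \<inter> (Ypart N h i r' \<union> Ypart N h j r') = {}"
      using assms by (auto simp: Ypart_def R_def)
  qed
  have cU2: "card (Ypart N h i r \<union> Ypart N h j r) = card (Ypart N h i r) + card (Ypart N h j r)"
    if "r \<in> R" for r
    by (rule card_Un_disjoint) (use that assms in \<open>auto simp: fY Ypart_def R_def\<close>)
  have fO: "finite ?O" by (rule finite_subset[OF _ finite_invs[of N h]]) auto
  have fP: "finite ?P" by (rule finite_subset[OF _ finite_invs[of N h]]) auto
  have fU: "finite ?U" using fR by (simp add: fY)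
  have "card (invs N h) = card ?O + card (?P \<union> ?U)"
    by (subst eq, rule card_Un_disjoint) (use d1 fO fP fU in auto)
  also have "card (?P \<union> ?U) = card ?P + card ?U"
    by (rule card_Un_disjoint) (use d2 fP fU in auto)
  finally show ?thesis using cP cU cU2 unfolding R_def by simp
qed

lemma inv_swap_fun:
  assumes "i < j" "j < N" "inj_on f {..<N}" "f i < f j" and g: "\<And>p. g p = f (tp i j p)"
  shows "card (invs N g) = card (invs N f) + 1 + 2 * card {r. i < r \<and> r < j \<and> f i < f r \<and> f r < f j}"
proof -
  define R where "R = {r. r < N \<and> r \<noteq> i \<and> r \<noteq> j}"
  have gO: "{(p,q) \<in> invs N g. p \<noteq> i \<and> p \<noteq> j \<and> q \<noteq> i \<and> q \<noteq> j} =
            {(p,q) \<in> invs N f. p \<noteq> i \<and> p \<noteq> j \<and> q \<noteq> i \<and> q \<noteq> j}"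
    by (auto simp: invs_def g tp_def)
  have gi: "g i = f j" "g j = f i" using assms by (auto simp: g tp_def)
  have per: "card (Ypart N g i r) + card (Ypart N g j r) =
      card (Ypart N f i r) + card (Ypart N f j r) + 2 * ind (i < r \<and> r < j \<and> f i < f r \<and> f r < f j)"
    if r: "r \<in> R" for r
  proof -
    have rN: "r < N" "r \<noteq> i" "r \<noteq> j" using r by (auto simp: R_def)
    have gr: "g r = f r" using rN by (simp add: g tp_def)
    have ne: "f r \<noteq> f i" "f r \<noteq> f j"
      using rN assms(1,2,3) by (auto dest: inj_onD)
    have iN: "i < N" using assms by simp
    show ?thesis
      unfolding card_Ypart[OF rN(1) iN rN(2)] card_Ypart[OF rN(1) assms(2) rN(3)]
      using rN assms(1,2,4) ne
      by (auto simp add: gi gr ind_def)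
  qed
  have sum: "(\<Sum>r\<in>R. card (Ypart N g i r) + card (Ypart N g j r)) =
     (\<Sum>r\<in>R. card (Ypart N f i r) + card (Ypart N f j r)) + 2 * (\<Sum>r\<in>R. ind (i < r \<and> r < j \<and> f i < f r \<and> f r < f j))"
    using per by (simp add: sum.distrib sum_distrib_left)
  have fR: "finite R" unfolding R_def by auto
  have cnt: "(\<Sum>r\<in>R. ind (i < r \<and> r < j \<and> f i < f r \<and> f r < f j)) = card {r. i < r \<and> r < j \<and> f i < f r \<and> f r < f j}"
  proof -
    have "(\<Sum>r\<in>R. ind (i < r \<and> r < j \<and> f i < f r \<and> f r < f j)) = card {r \<in> R. i < r \<and> r < j \<and> f i < f r \<and> f r < f j}"
      unfolding ind_def using fR by (simp add: sum.If_cases Int_def conj_commute)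
    also have "{r \<in> R. i < r \<and> r < j \<and> f i < f r \<and> f r < f j} = {r. i < r \<and> r < j \<and> f i < f r \<and> f r < f j}"
      using assms(2) by (auto simp: R_def)
    finally show ?thesis .
  qed
  have A: "card (invs N g) = card {(p,q) \<in> invs N f. p \<noteq> i \<and> p \<noteq> j \<and> q \<noteq> i \<and> q \<noteq> j} + ind (g j < g i)
     + (\<Sum>r\<in>R. card (Ypart N g i r) + card (Ypart N g j r))"
    using invs_decomp[OF assms(1,2), of g] gO unfolding R_def by simp
  have B: "card (invs N f) = card {(p,q) \<in> invs N f. p \<noteq> i \<and> p \<noteq> j \<and> q \<noteq> i \<and> q \<noteq> j} + ind (f j < f i)
     + (\<Sum>r\<in>R. card (Ypart N f i r) + card (Ypart N f j r))"
    using invs_decomp[OF assms(1,2), of f] unfolding R_def by simp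
  show ?thesis
    using A B sum cnt gi assms(4) by (simp add: ind_def)
qed

lemma inv_num_invs: "inv_num w = card (invs (length w) ((!) w))"
  unfolding inv_num_def invs_def by simp

definition cov :: "nat list \<Rightarrow> nat \<Rightarrow> nat \<Rightarrow> bool" where
  "cov a i j \<longleftrightarrow> a ! i < a ! j \<and> (\<forall>p. i < p \<and> p < j \<longrightarrow> \<not> (a ! i < a ! p \<and> a ! p < a ! j))"

lemma swap_swap: "i < length a \<Longrightarrow> j < length a \<Longrightarrow> swap_pos (swap_pos a i j) i j = a"
  by (rule nth_equalityI) (auto simp: nth_swap)

lemma inv_num_swap_lt:
  assumes "is_perm n a" "i < j" "j < n" "a ! i < a ! j"
  shows "inv_num (swap_pos a i j) = inv_num a + 1 + 2 * card {r. i < r \<and> r < j \<and> a ! i < a ! r \<and> a ! r < a ! j}"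
proof -
  have len: "length a = n" using assms(1) by (simp add: is_perm_def)
  have inj: "inj_on ((!) a) {..<n}"
    using is_perm_distinct[OF assms(1)] len by (simp add: inj_on_def nth_eq_iff_index_eq)
  show ?thesis
    unfolding inv_num_invs length_swap len
    by (rule inv_swap_fun[OF assms(2,3) inj assms(4)]) (rule nth_swap_tp, use len assms in auto)
qed

lemma cover_iff:
  assumes "is_perm n a" "i < j" "j < n"
  shows "inv_num (swap_pos a i j) = inv_num a + 1 \<longleftrightarrow> cov a i j"
proof (cases "a ! i < a ! j")
  case True
  let ?S = "{r. i < r \<and> r < j \<and> a ! i < a ! r \<and> a ! r < a ! j}"
  have fS: "finite ?S" by (rule finite_subset[of _ "{..<j}"]) auto
  show ?thesis
    unfolding inv_num_swap_lt[OF assms True] cov_def using True fS by auto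
next
  case False
  have len: "length a = n" using assms(1) by (simp add: is_perm_def)
  have ne: "a ! i \<noteq> a ! j" using is_perm_nth_inj[OF assms(1), of i j] assms by auto
  let ?b = "swap_pos a i j"
  have pb: "is_perm n ?b" using is_perm_swap assms by auto
  have lt: "?b ! i < ?b ! j" using False ne assms len by (simp add: nth_swap)
  have "inv_num (swap_pos ?b i j) = inv_num ?b + 1 + 2 * card {r. i < r \<and> r < j \<and> ?b ! i < ?b ! r \<and> ?b ! r < ?b ! j}"
    by (rule inv_num_swap_lt[OF pb assms(2,3) lt])
  hence "inv_num a > inv_num ?b" using swap_swap[of i a j] assms len by simp
  thus ?thesis using False by (auto simp: cov_def)
qed

lemma kcovers_iff:
  "kcovers n k u w \<longleftrightarrow> is_perm n u \<and> (\<exists>i j. i < k \<and> k \<le> j \<and> j < n \<and> w = swap_pos u i j \<and> cov u i j)"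
  unfolding kcovers_def
  by (metis cover_iff order_less_le_trans)

lemma covers_iff:
  "covers n u w \<longleftrightarrow> is_perm n u \<and> (\<exists>i j. i < j \<and> j < n \<and> w = swap_pos u i j \<and> cov u i j)"
  unfolding covers_def
  by (metis cover_iff)


lemma tp_eq_iff: "tp x y p = q \<longleftrightarrow> p = tp x y q"
  by (auto simp: tp_def)

lemma pos_analysis:
  fixes i j m m' i' j' k n :: nat
  assumes E: "\<And>p. p < n \<Longrightarrow> tp i j (tp 0 m p) = tp 0 m' (tp i' j' p)"
    and as: "i < k" "k \<le> j" "j < n" "0 < m" "m < n" "0 < m'" "m' < n" "i' < k" "k \<le> j'" "j' < n"
    and nz: "i = 0 \<Longrightarrow> m \<noteq> j" and nb: "\<not> (i = 0 \<and> m' = j)"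
  shows "(i = 0 \<and> m \<noteq> j \<and> m < k \<and> m' = m \<and> i' = m \<and> j' = j) \<or>
         (0 < i \<and> m = i \<and> ((m' = i \<and> i' = 0 \<and> j' = j) \<or> (m' = j \<and> i' = i \<and> j' = j))) \<or>
         (0 < i \<and> m = j \<and> m' = i \<and> i' = i \<and> j' = j) \<or>
         (0 < i \<and> m \<noteq> i \<and> m \<noteq> j \<and> m' = m \<and> i' = i \<and> j' = j)"
proof -
  have ij: "i < j" "i' < j'" using as by auto
  have t0: "tp 0 y x = 0 \<longleftrightarrow> x = y" if "y \<noteq> 0" for x y using that by (auto simp: tp_def)
  consider (z) "i = 0" | (mi) "0 < i" "m = i" | (mj) "0 < i" "m = j" | (o) "0 < i" "m \<noteq> i" "m \<noteq> j" by blast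
  thus ?thesis
  proof cases
    case z
    have mj: "m \<noteq> j" "m' \<noteq> j" using z nz nb by auto
    have s0: "tp 0 m' (tp i' j' 0) = m" using E[of 0] as z mj by (simp add: tp_def)
    have sj: "tp 0 m' (tp i' j' j) = 0" using E[of j] as z mj by (simp add: tp_def)
    hence "tp i' j' j = m'" using t0 as by auto
    hence "j' = j \<and> m' = i'" using mj as by (auto simp: tp_def split: if_splits)
    moreover have "i' \<noteq> 0" using calculation as by auto
    ultimately show ?thesis using s0 z mj as by (auto simp: tp_def)
  next
    case mi
    have s0: "tp 0 m' (tp i' j' 0) = j" using E[of 0] as mi ij by (simp add: tp_def)
    have si: "tp 0 m' (tp i' j' i) = 0" using E[of i] as mi ij by (simp add: tp_def)
    have sj: "tp 0 m' (tp i' j' j) = i" using E[of j] as mi ij by (simp add: tp_def)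
    have e: "tp i' j' i = m'" using si t0 as by auto
    show ?thesis
    proof (cases "i = i'")
      case True
      hence "m' = j'" using e by (simp add: tp_def)
      thus ?thesis using s0 True mi as by (auto simp: tp_def)
    next
      case False
      have "i \<noteq> j'" using as by auto
      hence m'i: "m' = i" using e False by (simp add: tp_def)
      hence "tp i' j' j = 0" using sj mi by (auto simp: tp_def split: if_splits)
      hence "i' = 0 \<and> j' = j" using as ij by (auto simp: tp_def split: if_splits)
      thus ?thesis using m'i mi by auto
    qed
  next
    case mj
    have s0: "tp 0 m' (tp i' j' 0) = i" using E[of 0] as mj ij by (simp add: tp_def)
    have si: "tp 0 m' (tp i' j' i) = j" using E[of i] as mj ij by (simp add: tp_def)
    have sj: "tp 0 m' (tp i' j' j) = 0" using E[of j] as mj ij by (simp add: tp_def)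
    have e: "tp i' j' j = m'" using sj t0 as by auto
    have "j \<noteq> i'" using as by auto
    show ?thesis
    proof (cases "j = j'")
      case True
      hence "m' = i'" using e \<open>j \<noteq> i'\<close> by (simp add: tp_def)
      thus ?thesis using s0 True mj as by (auto simp: tp_def split: if_splits)
    next
      case False
      hence m'j: "m' = j" using e \<open>j \<noteq> i'\<close> by (simp add: tp_def)
      hence "tp i' j' i = 0" using si mj ij by (auto simp: tp_def split: if_splits)
      hence "i' = 0 \<and> j' = i" using as ij mj by (auto simp: tp_def split: if_splits)
      thus ?thesis using as by auto
    qed
  next
    case o
    have s0: "tp 0 m' (tp i' j' 0) = m" using E[of 0] as o ij by (simp add: tp_def)
    have sm: "tp 0 m' (tp i' j' m) = 0" using E[of m] as o ij by (simp add: tp_def)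
    have si: "tp 0 m' (tp i' j' i) = j" using E[of i] as o ij by (simp add: tp_def)
    have e: "tp i' j' m = m'" using sm t0 as by auto
    have "m \<noteq> i' \<and> m \<noteq> j'"
    proof (rule ccontr)
      assume "\<not> (m \<noteq> i' \<and> m \<noteq> j')"
      thus False using e s0 as ij o by (auto simp: tp_def split: if_splits)
    qed
    hence m'm: "m' = m" using e by (simp add: tp_def)
    hence "tp i' j' i = j" using si o ij as by (auto simp: tp_def split: if_splits)
    hence "i' = i \<and> j' = j" using ij o by (auto simp: tp_def split: if_splits)
    thus ?thesis using m'm o by auto
  qed
qed


lemma exch_min_swap:
  assumes "distinct u" "p < length u" "q < length u" "p \<noteq> q"
  shows "exch_min u (swap_pos u p q) = min (u ! p) (u ! q)"
proof -
  have ne: "u ! p \<noteq> u ! q" using assms by (simp add: nth_eq_iff_index_eq)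
  have "{u ! r | r. r < length u \<and> u ! r \<noteq> swap_pos u p q ! r} = {u ! p, u ! q}"
    using assms ne by (auto simp: nth_swap)
  thus ?thesis unfolding exch_min_def by (simp add: min_def)
qed

definition Hs :: "nat \<Rightarrow> nat \<Rightarrow> nat list \<Rightarrow> bool" where
  "Hs n k v \<longleftrightarrow> (\<forall>p q. k \<le> p \<and> p < q \<and> q < n \<and> v ! p < v ! q \<longrightarrow> v ! 0 < v ! p)"

lemma kcoversI: "is_perm n u \<Longrightarrow> i < k \<Longrightarrow> k \<le> j \<Longrightarrow> j < n \<Longrightarrow> cov u i j \<Longrightarrow> kcovers n k u (swap_pos u i j)"
  unfolding kcovers_iff by blast


lemma Hs_back:
  assumes P: "is_perm n v" and "0 < m" "m < n" "cov v 0 m" "1 \<le> k" and H: "Hs n k (swap_pos v 0 m)"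
  shows "Hs n k v"
  unfolding Hs_def
proof (intro allI impI)
  fix p q assume pq: "k \<le> p \<and> p < q \<and> q < n \<and> v ! p < v ! q"
  have len: "length v = n" using P by (simp add: is_perm_def)
  have cv: "swap_pos v 0 m ! x = (if x = m then v ! 0 else if x = 0 then v ! m else v ! x)" for x
    using nth_swap[of 0 v m x] len assms by auto
  have vm: "v ! 0 < v ! m" using assms by (simp add: cov_def)
  have inj: "x < n \<Longrightarrow> y < n \<Longrightarrow> v ! x = v ! y \<longleftrightarrow> x = y" for x y
    using is_perm_nth_inj[OF P] by blast
  have Hc: "k \<le> x \<Longrightarrow> x < y \<Longrightarrow> y < n \<Longrightarrow> swap_pos v 0 m ! x < swap_pos v 0 m ! y \<Longrightarrow> swap_pos v 0 m ! 0 < swap_pos v 0 m ! x" for x y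
    using H unfolding Hs_def by blast
  show "v ! 0 < v ! p"
  proof (cases "p = m")
    case True thus ?thesis using vm pq by simp
  next
    case pm: False
    show ?thesis
    proof (cases "q = m")
      case True
      show ?thesis
      proof (rule ccontr)
        assume "\<not> v ! 0 < v ! p"
        hence "v ! p < v ! 0" using inj[of p 0] pq assms by (auto simp: nat_neq_iff)
        thus False using Hc[of p q] pq True pm assms vm by (auto simp: cv)
      qed
    next
      case False
      thus ?thesis using Hc[of p q] pq pm assms vm by (auto simp: cv)
    qed
  qed
qed

lemma kcovers_covers: "kcovers n k u w \<Longrightarrow> covers n u w"
  unfolding kcovers_def covers_def by (metis order_less_le_trans)

lemma kcoversE:
  assumes "kcovers n k u w"
  obtains i j where "i < k" "k \<le> j" "j < n" "w = swap_pos u i j" "cov u i j" "is_perm n u"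
  using assms unfolding kcovers_iff by blast

definition good :: "nat \<Rightarrow> nat \<Rightarrow> nat \<Rightarrow> nat list \<Rightarrow> nat list \<Rightarrow> nat list \<Rightarrow> nat list \<Rightarrow> bool" where
  "good n k1 k2 a b c b' \<longleftrightarrow> b' \<noteq> b \<and> covers n a b' \<and> covers n b' c \<and> kcovers n k2 a b' \<and> kcovers n k1 b' c"

definition cellrel :: "nat \<Rightarrow> nat \<Rightarrow> nat \<Rightarrow> nat list \<Rightarrow> nat list \<Rightarrow> nat list \<Rightarrow> nat list \<Rightarrow> bool" where
  "cellrel n k1 k2 a b c h \<longleftrightarrow> kcovers n k1 a b \<and> kcovers n k2 b c \<and>
     ((\<exists>b'. good n k1 k2 a b c b' \<and> h = b') \<or>
      ((\<forall>b'. b' \<noteq> b \<and> covers n a b' \<and> covers n b' c \<longrightarrow> \<not> (kcovers n k2 a b' \<and> kcovers n k1 b' c)) \<and> h = b))"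


definition cases6 :: "nat \<Rightarrow> nat list \<Rightarrow> nat \<Rightarrow> nat \<Rightarrow> nat \<Rightarrow> nat list \<Rightarrow> bool" where
  "cases6 k a i j m h \<longleftrightarrow>
   (i = 0 \<and> m \<noteq> j \<and> k \<le> m \<and> h = swap_pos a i j) \<or>
   (0 < i \<and> m = i \<and> a ! 0 < a ! i \<and> h = swap_pos a 0 i) \<or>
   (0 < i \<and> m = i \<and> a ! i < a ! 0 \<and> h = swap_pos a 0 j) \<or>
   (0 < i \<and> m = j \<and> h = swap_pos a 0 i) \<or>
   (0 < i \<and> m \<noteq> i \<and> m \<noteq> j \<and> h = swap_pos a 0 m) \<or>
   (i = 0 \<and> m \<noteq> j \<and> m < k \<and> h = swap_pos a 0 m)"

definition exf :: "nat \<Rightarrow> nat list \<Rightarrow> nat \<Rightarrow> nat \<Rightarrow> nat \<Rightarrow> nat" where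
  "exf k a i j m = (if i = 0 \<and> k \<le> m then a ! j else if 0 < i \<and> m = j then a ! 0 else a ! i)"

definition mout :: "nat \<Rightarrow> nat list \<Rightarrow> nat \<Rightarrow> nat \<Rightarrow> nat \<Rightarrow> nat" where
  "mout k a i j m = (if i = 0 then (if k \<le> m then j else m) else if m = i then (if a ! 0 < a ! i then i else j) else if m = j then i else m)"

context
  fixes n k :: nat and a :: "nat list" and i j m :: nat
  assumes P: "is_perm n a" and k1: "1 \<le> k" and ik: "i < k" and kj: "k \<le> j" and jn: "j < n"
    and cij: "cov a i j" and m0: "0 < m" and mn: "m < n" and cm: "cov (swap_pos a i j) 0 m"
begin

lemma len: "length a = n" using P by (simp add: is_perm_def)

lemma inj: "p < n \<Longrightarrow> q < n \<Longrightarrow> a ! p = a ! q \<longleftrightarrow> p = q"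
  using is_perm_nth_inj[OF P] by blast

lemma bv: "swap_pos a i j ! p = (if p = j then a ! i else if p = i then a ! j else a ! p)"
  using nth_swap[of i a j p] len ik kj jn by auto

lemma cv: "swap_pos (swap_pos a i j) 0 m ! p = (if p = m then swap_pos a i j ! 0 else if p = 0 then swap_pos a i j ! m else swap_pos a i j ! p)"
  using nth_swap[of 0 "swap_pos a i j" m p] len mn by auto

lemma xy: "a ! i < a ! j" using cij by (simp add: cov_def)
lemma cij': "i < p \<Longrightarrow> p < j \<Longrightarrow> \<not> (a ! i < a ! p \<and> a ! p < a ! j)" using cij by (simp add: cov_def)
lemma cm1: "swap_pos a i j ! 0 < swap_pos a i j ! m" using cm by (simp add: cov_def)
lemma cm': "0 < p \<Longrightarrow> p < m \<Longrightarrow> \<not> (swap_pos a i j ! 0 < swap_pos a i j ! p \<and> swap_pos a i j ! p < swap_pos a i j ! m)"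
  using cm by (simp add: cov_def)

definition B :: "nat \<Rightarrow> nat" where "B p = (if p = j then a ! i else if p = i then a ! j else a ! p)"
definition Cc :: "nat \<Rightarrow> nat" where "Cc p = (if p = m then B 0 else if p = 0 then B m else B p)"

lemma bB: "swap_pos a i j ! p = B p" using bv B_def by simp
lemma cC: "swap_pos (swap_pos a i j) 0 m ! p = Cc p" using cv Cc_def bB by simp
lemma cm1v: "B 0 < B m" using cm1 bB by simp
lemma cm'v: "0 < p \<Longrightarrow> p < m \<Longrightarrow> \<not> (B 0 < B p \<and> B p < B m)" using cm' bB by simp

lemma j0: "0 < j" using k1 kj by simp
lemmas bas = k1 ik kj jn m0 mn j0

lemmas cm1e = cm1v[unfolded B_def]
lemmas cm'e = cm'v[unfolded B_def]
lemmas cCe = cC[unfolded Cc_def B_def]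
lemmas bBe = bB[unfolded B_def]

lemma not_mj_if_i0: "i = 0 \<Longrightarrow> m \<noteq> j"
  using cm1e xy bas by auto

lemma caseD:
  assumes "i = 0" "m \<noteq> j" "m < k"
  shows "kcovers n 1 a (swap_pos a 0 m) \<and> kcovers n k (swap_pos a 0 m) (swap_pos (swap_pos a i j) 0 m)
     \<and> swap_pos a 0 m \<noteq> swap_pos a i j"
proof -
  let ?h = "swap_pos a 0 m"
  have hv: "?h ! p = (if p = m then a ! 0 else if p = 0 then a ! m else a ! p)" for p
    using nth_swap[of 0 a m p] len mn by auto
  have c1: "cov a 0 m"
    unfolding cov_def
  proof (intro conjI allI impI)
    show "a ! 0 < a ! m" using cm1e xy assms bas by auto
    fix p assume p: "0 < p \<and> p < m"
    show "\<not> (a ! 0 < a ! p \<and> a ! p < a ! m)"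
      using cm'e[of p] cij'[of p] p assms bas inj[of p j] by auto
  qed
  have c2: "cov ?h m j"
    unfolding cov_def using xy cij' assms kj m0 by (auto simp: hv)
  have eq: "swap_pos (swap_pos a i j) 0 m = swap_pos ?h m j"
    by (rule nth_equalityI) (use len bas assms cCe in \<open>auto simp: nth_swap hv\<close>)
  have ne: "?h \<noteq> swap_pos a i j"
  proof
    assume "?h = swap_pos a i j"
    hence "?h ! 0 = swap_pos a i j ! 0" by simp
    thus False using assms inj[of m j] bas bBe by (auto simp: hv)
  qed
  show ?thesis
    unfolding eq using kcoversI[OF P, of 0 1 m] kcoversI[OF is_perm_swap[OF P, of 0 m], of m k j] c1 c2 ne assms bas by auto
qed

lemma caseS:
  assumes "i = 0" "m \<noteq> j" "k \<le> m"
  shows "kcovers n 1 a (swap_pos a i j) \<and> kcovers n k (swap_pos a i j) (swap_pos (swap_pos a i j) 0 m)"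
  using kcoversI[OF P, of i 1 j] kcoversI[OF is_perm_swap[OF P, of i j], of 0 k m] cij cm assms bas by auto

lemma caseA1:
  assumes "0 < i" "m = i" "a ! 0 < a ! i"
  shows "kcovers n 1 a (swap_pos a 0 i) \<and> kcovers n k (swap_pos a 0 i) (swap_pos (swap_pos a i j) 0 m)
     \<and> swap_pos a 0 i \<noteq> swap_pos a i j"
proof -
  let ?h = "swap_pos a 0 i"
  have hv: "?h ! p = (if p = i then a ! 0 else if p = 0 then a ! i else a ! p)" for p
    using nth_swap[of 0 a i p] len bas by auto
  have c1: "cov a 0 i"
    unfolding cov_def
  proof (intro conjI allI impI)
    show "a ! 0 < a ! i" using assms by simp
    fix p assume p: "0 < p \<and> p < i"
    show "\<not> (a ! 0 < a ! p \<and> a ! p < a ! i)"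
      using cm'e[of p] p assms bas xy by auto
  qed
  have c2: "cov ?h 0 j"
    unfolding cov_def
  proof (intro conjI allI impI)
    show "?h ! 0 < ?h ! j" using assms bas xy by (auto simp: hv)
    fix p assume p: "0 < p \<and> p < j"
    show "\<not> (?h ! 0 < ?h ! p \<and> ?h ! p < ?h ! j)"
      using cm'e[of p] cij'[of p] p assms bas xy by (cases "p < i"; cases "i < p") (auto simp: hv)
  qed
  have eq: "swap_pos (swap_pos a i j) 0 m = swap_pos ?h 0 j"
    by (rule nth_equalityI) (use len bas assms cCe in \<open>auto simp: nth_swap hv\<close>)
  have ne: "?h \<noteq> swap_pos a i j"
  proof
    assume "?h = swap_pos a i j"
    hence "?h ! 0 = swap_pos a i j ! 0" by simp
    thus False using assms inj[of i 0] bas bBe by (auto simp: hv)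
  qed
  show ?thesis
    unfolding eq using kcoversI[OF P, of 0 1 i] kcoversI[OF is_perm_swap[OF P, of 0 i], of 0 k j] c1 c2 ne assms bas by auto
qed

lemma caseA2:
  assumes "0 < i" "m = i" "a ! i < a ! 0"
  shows "kcovers n 1 a (swap_pos a 0 j) \<and> kcovers n k (swap_pos a 0 j) (swap_pos (swap_pos a i j) 0 m)
     \<and> swap_pos a 0 j \<noteq> swap_pos a i j"
proof -
  let ?h = "swap_pos a 0 j"
  have hv: "?h ! p = (if p = j then a ! 0 else if p = 0 then a ! j else a ! p)" for p
    using nth_swap[of 0 a j p] len bas by auto
  have c1: "cov a 0 j"
    unfolding cov_def
  proof (intro conjI allI impI)
    show "a ! 0 < a ! j" using assms cm1e bas by auto
    fix p assume p: "0 < p \<and> p < j"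
    show "\<not> (a ! 0 < a ! p \<and> a ! p < a ! j)"
      using cm'e[of p] cij'[of p] p assms bas xy by (cases "p < i"; cases "i < p") auto
  qed
  have c2: "cov ?h i j"
    unfolding cov_def
  proof (intro conjI allI impI)
    show "?h ! i < ?h ! j" using assms bas by (auto simp: hv)
    fix p assume p: "i < p \<and> p < j"
    show "\<not> (?h ! i < ?h ! p \<and> ?h ! p < ?h ! j)"
      using cij'[of p] p assms bas xy cm1e by (auto simp: hv)
  qed
  have eq: "swap_pos (swap_pos a i j) 0 m = swap_pos ?h i j"
    by (rule nth_equalityI) (use len bas assms cCe in \<open>auto simp: nth_swap hv\<close>)
  have ne: "?h \<noteq> swap_pos a i j"
  proof
    assume "?h = swap_pos a i j"
    hence "?h ! 0 = swap_pos a i j ! 0" by simp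
    thus False using assms inj[of j 0] bas bBe by (auto simp: hv)
  qed
  show ?thesis
    unfolding eq using kcoversI[OF P, of 0 1 j] kcoversI[OF is_perm_swap[OF P, of 0 j], of i k j] c1 c2 ne assms bas by auto
qed

lemma caseB:
  assumes "0 < i" "m = j"
  shows "kcovers n 1 a (swap_pos a 0 i) \<and> kcovers n k (swap_pos a 0 i) (swap_pos (swap_pos a i j) 0 m)
     \<and> swap_pos a 0 i \<noteq> swap_pos a i j"
proof -
  let ?h = "swap_pos a 0 i"
  have hv: "?h ! p = (if p = i then a ! 0 else if p = 0 then a ! i else a ! p)" for p
    using nth_swap[of 0 a i p] len bas by auto
  have c1: "cov a 0 i"
    unfolding cov_def
  proof (intro conjI allI impI)
    show "a ! 0 < a ! i" using assms cm1e bas by auto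
    fix p assume p: "0 < p \<and> p < i"
    show "\<not> (a ! 0 < a ! p \<and> a ! p < a ! i)"
      using cm'e[of p] p assms bas xy by auto
  qed
  have c2: "cov ?h i j"
    unfolding cov_def
  proof (intro conjI allI impI)
    show "?h ! i < ?h ! j" using assms bas xy cm1e by (auto simp: hv)
    fix p assume p: "i < p \<and> p < j"
    show "\<not> (?h ! i < ?h ! p \<and> ?h ! p < ?h ! j)"
      using cm'e[of p] cij'[of p] p assms bas xy inj[of p i] by (auto simp: hv)
  qed
  have eq: "swap_pos (swap_pos a i j) 0 m = swap_pos ?h i j"
    by (rule nth_equalityI) (use len bas assms cCe in \<open>auto simp: nth_swap hv\<close>)
  have ne: "?h \<noteq> swap_pos a i j"
  proof
    assume "?h = swap_pos a i j"
    hence "?h ! 0 = swap_pos a i j ! 0" by simp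
    thus False using assms inj[of i 0] bas bBe by (auto simp: hv)
  qed
  show ?thesis
    unfolding eq using kcoversI[OF P, of 0 1 i] kcoversI[OF is_perm_swap[OF P, of 0 i], of i k j] c1 c2 ne assms bas by auto
qed

lemma caseC:
  assumes "0 < i" "m \<noteq> i" "m \<noteq> j"
  shows "kcovers n 1 a (swap_pos a 0 m) \<and> kcovers n k (swap_pos a 0 m) (swap_pos (swap_pos a i j) 0 m)
     \<and> swap_pos a 0 m \<noteq> swap_pos a i j"
proof -
  let ?h = "swap_pos a 0 m"
  have hv: "?h ! p = (if p = m then a ! 0 else if p = 0 then a ! m else a ! p)" for p
    using nth_swap[of 0 a m p] len bas by auto
  have am: "a ! 0 < a ! m" using cm1e assms bas by auto
  have c1: "cov a 0 m"
    unfolding cov_def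
  proof (intro conjI allI impI)
    show "a ! 0 < a ! m" by (rule am)
    fix p assume p: "0 < p \<and> p < m"
    show "\<not> (a ! 0 < a ! p \<and> a ! p < a ! m)"
    proof (cases "p = i \<or> p = j")
      case False thus ?thesis using cm'e[of p] p assms bas by auto
    next
      case True
      show ?thesis
      proof (cases "p = i")
        case pi: True
        show ?thesis
        proof (cases "j < m")
          case True thus ?thesis using cm'e[of j] pi p assms bas by auto
        next
          case False
          hence "i < m" "m < j" using p pi assms inj[of m j] bas by auto
          thus ?thesis using cij'[of m] cm'e[of i] pi p assms bas xy inj[of m j] by auto
        qed
      next
        case False
        hence "p = j" using True by simp
        thus ?thesis using cm'e[of i] p assms bas by auto
      qed
    qed
  qed
  have c2: "cov ?h i j"
    unfolding cov_def
  proof (intro conjI allI impI)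
    show "?h ! i < ?h ! j" using assms bas xy by (auto simp: hv)
    fix p assume p: "i < p \<and> p < j"
    show "\<not> (?h ! i < ?h ! p \<and> ?h ! p < ?h ! j)"
    proof (cases "p = m")
      case False thus ?thesis using cij'[of p] p assms bas by (auto simp: hv)
    next
      case True
      thus ?thesis using cij'[of m] cm'e[of i] p assms bas am inj[of m j] by (auto simp: hv)
    qed
  qed
  have eq: "swap_pos (swap_pos a i j) 0 m = swap_pos ?h i j"
    by (rule nth_equalityI) (use len bas assms cCe in \<open>auto simp: nth_swap hv\<close>)
  have ne: "?h \<noteq> swap_pos a i j"
  proof
    assume "?h = swap_pos a i j"
    hence "?h ! 0 = swap_pos a i j ! 0" by simp
    thus False using assms inj[of m 0] bas bBe by (auto simp: hv)
  qed
  show ?thesis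
    unfolding eq using kcoversI[OF P, of 0 1 m] kcoversI[OF is_perm_swap[OF P, of 0 m], of i k j] c1 c2 ne assms bas by auto
qed

lemma HsS:
  assumes "Hs n k (swap_pos (swap_pos a i j) 0 m)"
  shows "Hs n k (swap_pos a i j)"
  by (rule Hs_back[OF is_perm_swap[OF P] m0 mn cm k1 assms]) (use bas in auto)

lemma Hc: "Hs n k (swap_pos (swap_pos a i j) 0 m) \<Longrightarrow> k \<le> x \<Longrightarrow> x < y \<Longrightarrow> y < n \<Longrightarrow>
   swap_pos (swap_pos a i j) 0 m ! x < swap_pos (swap_pos a i j) 0 m ! y \<Longrightarrow>
   swap_pos (swap_pos a i j) 0 m ! 0 < swap_pos (swap_pos a i j) 0 m ! x"
  unfolding Hs_def by blast

lemmas Hce = Hc[unfolded cCe]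

lemma HsA1:
  assumes H: "Hs n k (swap_pos (swap_pos a i j) 0 m)" and "0 < i" "m = i" "a ! 0 < a ! i"
  shows "Hs n k (swap_pos a 0 i)"
  unfolding Hs_def
proof (intro allI impI)
  fix p q assume pq: "k \<le> p \<and> p < q \<and> q < n \<and> swap_pos a 0 i ! p < swap_pos a 0 i ! q"
  have hv: "swap_pos a 0 i ! x = (if x = i then a ! 0 else if x = 0 then a ! i else a ! x)" for x
    using nth_swap[of 0 a i x] len bas by auto
  show "swap_pos a 0 i ! 0 < swap_pos a 0 i ! p"
    using Hce[OF H, of p q] Hce[OF H, of p j] cij'[of p] pq assms bas xy inj[of p i] inj[of p j]
    by (cases "p = j"; cases "q = j") (auto simp: hv nat_neq_iff)
qed

lemma HsA2:
  assumes H: "Hs n k (swap_pos (swap_pos a i j) 0 m)" and "0 < i" "m = i" "a ! i < a ! 0"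
  shows "Hs n k (swap_pos a 0 j)"
  unfolding Hs_def
proof (intro allI impI)
  fix p q assume pq: "k \<le> p \<and> p < q \<and> q < n \<and> swap_pos a 0 j ! p < swap_pos a 0 j ! q"
  have hv: "swap_pos a 0 j ! x = (if x = j then a ! 0 else if x = 0 then a ! j else a ! x)" for x
    using nth_swap[of 0 a j x] len bas by auto
  show "swap_pos a 0 j ! 0 < swap_pos a 0 j ! p"
    using Hce[OF H, of p q] Hce[OF H, of p j] Hce[OF H, of j q] cij'[of p] cm1e pq assms bas xy inj[of p i] inj[of p j]
    by (cases "p = j"; cases "q = j") (auto simp: hv nat_neq_iff)
qed

lemma HsB:
  assumes H: "Hs n k (swap_pos (swap_pos a i j) 0 m)" and "0 < i" "m = j"
  shows "Hs n k (swap_pos a 0 i)"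
  unfolding Hs_def
proof (intro allI impI)
  fix p q assume pq: "k \<le> p \<and> p < q \<and> q < n \<and> swap_pos a 0 i ! p < swap_pos a 0 i ! q"
  have hv: "swap_pos a 0 i ! x = (if x = i then a ! 0 else if x = 0 then a ! i else a ! x)" for x
    using nth_swap[of 0 a i x] len bas by auto
  show "swap_pos a 0 i ! 0 < swap_pos a 0 i ! p"
    using Hce[OF H, of p q] Hce[OF H, of p j] cm'e[of p] cm1e pq assms bas xy inj[of p i] inj[of p j] inj[of p 0]
    by (cases "p = j"; cases "q = j") (auto simp: hv nat_neq_iff)
qed

lemma HsC:
  assumes H: "Hs n k (swap_pos (swap_pos a i j) 0 m)" and "0 < i" "m \<noteq> i" "m \<noteq> j"
  shows "Hs n k (swap_pos a 0 m)"
  unfolding Hs_def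
proof (intro allI impI)
  fix p q assume pq: "k \<le> p \<and> p < q \<and> q < n \<and> swap_pos a 0 m ! p < swap_pos a 0 m ! q"
  have hv: "swap_pos a 0 m ! x = (if x = m then a ! 0 else if x = 0 then a ! m else a ! x)" for x
    using nth_swap[of 0 a m x] len bas by auto
  have am: "a ! 0 < a ! m" using cm1e assms bas by auto
  show "swap_pos a 0 m ! 0 < swap_pos a 0 m ! p"
  proof (cases "p = j")
    case True
    thus ?thesis using Hce[OF H, of j q] pq assms bas xy am by (auto simp: hv split: if_splits)
  next
    case pj: False
    show ?thesis
    proof (cases "q = j")
      case False
      thus ?thesis using Hce[OF H, of p q] pq pj assms bas by (auto simp: hv split: if_splits)
    next
      case qj: True
      show ?thesis
      proof (cases "swap_pos a 0 m ! p < a ! i")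
        case True
        thus ?thesis using Hce[OF H, of p j] pq pj qj assms bas by (auto simp: hv split: if_splits)
      next
        case False
        have ne: "swap_pos a 0 m ! p \<noteq> a ! i" using pq inj[of p i] inj[of 0 i] assms bas by (auto simp: hv)
        have lt: "a ! i < swap_pos a 0 m ! p" "swap_pos a 0 m ! p < a ! j"
          using False ne pq qj assms bas by (auto simp: hv)
        show ?thesis
        proof (cases "p = m")
          case False
          thus ?thesis using lt cij'[of p] pq qj assms bas by (auto simp: hv)
        next
          case True
          have "a ! j < a ! m" using cij'[of m] lt True am pq qj assms bas inj[of m j] by (auto simp: hv nat_neq_iff)
          thus ?thesis using cm'e[of i] lt True pq qj assms bas by (auto simp: hv)
        qed
      qed
    qed
  qed
qed

lemma HsD:
  assumes H: "Hs n k (swap_pos (swap_pos a i j) 0 m)" and "i = 0" "m \<noteq> j" "m < k"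
  shows "Hs n k (swap_pos a 0 m)"
  unfolding Hs_def
proof (intro allI impI)
  fix p q assume pq: "k \<le> p \<and> p < q \<and> q < n \<and> swap_pos a 0 m ! p < swap_pos a 0 m ! q"
  have hv: "swap_pos a 0 m ! x = (if x = m then a ! 0 else if x = 0 then a ! m else a ! x)" for x
    using nth_swap[of 0 a m x] len bas by auto
  have am: "a ! j < a ! m" using cm1e assms bas by auto
  show "swap_pos a 0 m ! 0 < swap_pos a 0 m ! p"
    using Hce[OF H, of p q] Hce[OF H, of p j] Hce[OF H, of j q] cij'[of p] am pq assms bas xy inj[of p 0] inj[of p j]
    by (cases "p = j"; cases "q = j") (auto simp: hv nat_neq_iff)
qed


lemma good_of:
  assumes "kcovers n 1 a h" "kcovers n k h (swap_pos (swap_pos a i j) 0 m)" "h \<noteq> swap_pos a i j"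
  shows "good n k 1 a (swap_pos a i j) (swap_pos (swap_pos a i j) 0 m) h"
  using assms kcovers_covers unfolding good_def by blast

lemma cell_cases:
  assumes R: "(\<exists>b'. good n k 1 a (swap_pos a i j) (swap_pos (swap_pos a i j) 0 m) b' \<and> h = b') \<or>
      ((\<forall>b'. b' \<noteq> swap_pos a i j \<and> covers n a b' \<and> covers n b' (swap_pos (swap_pos a i j) 0 m) \<longrightarrow>
          \<not> (kcovers n 1 a b' \<and> kcovers n k b' (swap_pos (swap_pos a i j) 0 m))) \<and> h = swap_pos a i j)"
  shows "cases6 k a i j m h"
  using R
proof
  assume "\<exists>b'. good n k 1 a (swap_pos a i j) (swap_pos (swap_pos a i j) 0 m) b' \<and> h = b'"
  then obtain b' where g: "good n k 1 a (swap_pos a i j) (swap_pos (swap_pos a i j) 0 m) b'" and hb: "h = b'" by blast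
  from g have k1a: "kcovers n 1 a b'" and kkb: "kcovers n k b' (swap_pos (swap_pos a i j) 0 m)" and nb: "b' \<noteq> swap_pos a i j"
    unfolding good_def by auto
  obtain i1 m' where i1: "i1 < 1" "1 \<le> m'" "m' < n" "b' = swap_pos a i1 m'" "cov a i1 m'"
    using k1a by (rule kcoversE)
  have i10: "i1 = 0" using i1 by simp
  obtain i' j' where ij': "i' < k" "k \<le> j'" "j' < n" "swap_pos (swap_pos a i j) 0 m = swap_pos b' i' j'" "cov b' i' j'"
    using kkb by (rule kcoversE)
  have E: "tp i j (tp 0 m p) = tp 0 m' (tp i' j' p)" if p: "p < n" for p
  proof -
    have t1: "tp 0 m p < n" "tp i' j' p < n" "tp i j (tp 0 m p) < n" "tp 0 m' (tp i' j' p) < n"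
      using p bas ij' i1 by (auto simp: tp_def)
    have "swap_pos (swap_pos a i j) 0 m ! p = a ! tp i j (tp 0 m p)"
      using p bas len t1 by (simp add: nth_swap_tp)
    moreover have "swap_pos b' i' j' ! p = a ! tp 0 m' (tp i' j' p)"
      using p bas len t1 ij' i1 i10 by (simp add: nth_swap_tp)
    ultimately have "a ! tp i j (tp 0 m p) = a ! tp 0 m' (tp i' j' p)" using ij'(4) by simp
    thus ?thesis using inj t1 by blast
  qed
  have nb2: "\<not> (i = 0 \<and> m' = j)" using nb i1 i10 by auto
  have m'0: "0 < m'" using i1 by simp
  note PA = pos_analysis[OF E ik kj jn m0 mn m'0 i1(3) ij'(1) ij'(2) ij'(3) not_mj_if_i0 nb2]
  have cv1: "a ! 0 < a ! m'" using i1 i10 by (simp add: cov_def)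
  have cv2: "b' ! i' < b' ! j'" using ij' by (simp add: cov_def)
  have b'v: "b' ! x = (if x = m' then a ! 0 else if x = 0 then a ! m' else a ! x)" for x
    using nth_swap[of 0 a m' x] i1 i10 len by auto
  have f1: "a ! i < a ! 0" if "m' = j" "i' = i" "j' = j" "0 < i"
    using cv2 that bas unfolding b'v by auto
  have hh: "h = swap_pos a 0 m'" using hb i1 i10 by simp
  show "cases6 k a i j m h"
    unfolding cases6_def hh using PA cv1 f1 by auto
next
  assume st: "(\<forall>b'. b' \<noteq> swap_pos a i j \<and> covers n a b' \<and> covers n b' (swap_pos (swap_pos a i j) 0 m) \<longrightarrow>
          \<not> (kcovers n 1 a b' \<and> kcovers n k b' (swap_pos (swap_pos a i j) 0 m))) \<and> h = swap_pos a i j"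
  have nog: "\<not> good n k 1 a (swap_pos a i j) (swap_pos (swap_pos a i j) 0 m) b'" for b'
    using st unfolding good_def by blast
  have ne: "a ! 0 \<noteq> a ! i" if "0 < i" using inj[of 0 i] that bas by auto
  show "cases6 k a i j m h"
  proof (cases "i = 0")
    case True
    have "m \<noteq> j" using not_mj_if_i0 True by simp
    moreover have "\<not> m < k"
      using caseD[OF True \<open>m \<noteq> j\<close>] nog good_of by blast
    ultimately show ?thesis unfolding cases6_def using st True by auto
  next
    case False
    hence i0: "0 < i" by simp
    have False
    proof (cases "m = i")
      case True
      show False
      proof (cases "a ! 0 < a ! i")
        case True
        thus False using caseA1[OF i0 \<open>m = i\<close>] nog good_of by blast
      next
        case False
        hence "a ! i < a ! 0" using ne[OF i0] by simp
        thus False using caseA2[OF i0 \<open>m = i\<close>] nog good_of by blast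
      qed
    next
      case mi: False
      show False
      proof (cases "m = j")
        case True
        thus False using caseB[OF i0] nog good_of by blast
      next
        case False
        thus False using caseC[OF i0 mi] nog good_of by blast
      qed
    qed
    thus ?thesis ..
  qed
qed

lemma cases6_props:
  assumes "cases6 k a i j m h" "Hs n k (swap_pos (swap_pos a i j) 0 m)"
  shows "kcovers n 1 a h \<and> kcovers n k h (swap_pos (swap_pos a i j) 0 m) \<and> Hs n k h"
  using assms(1) unfolding cases6_def
proof (elim disjE conjE)
  assume "i = 0" "m \<noteq> j" "k \<le> m" "h = swap_pos a i j"
  thus ?thesis using caseS HsS[OF assms(2)] by auto
next
  assume "0 < i" "m = i" "a ! 0 < a ! i" "h = swap_pos a 0 i"
  thus ?thesis using caseA1 HsA1[OF assms(2)] by auto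
next
  assume "0 < i" "m = i" "a ! i < a ! 0" "h = swap_pos a 0 j"
  thus ?thesis using caseA2 HsA2[OF assms(2)] by auto
next
  assume "0 < i" "m = j" "h = swap_pos a 0 i"
  thus ?thesis using caseB HsB[OF assms(2)] by auto
next
  assume "0 < i" "m \<noteq> i" "m \<noteq> j" "h = swap_pos a 0 m"
  thus ?thesis using caseC HsC[OF assms(2)] by auto
next
  assume "i = 0" "m \<noteq> j" "m < k" "h = swap_pos a 0 m"
  thus ?thesis using caseD HsD[OF assms(2)] by auto
qed

lemma eq_h: 
  assumes "mm < n"
  shows "swap_pos a 0 mm ! x = (if x = mm then a ! 0 else if x = 0 then a ! mm else a ! x)"
  using nth_swap[of 0 a mm x] len assms bas by auto

lemma eqA1: "0 < i \<Longrightarrow> m = i \<Longrightarrow> swap_pos (swap_pos a i j) 0 m = swap_pos (swap_pos a 0 i) 0 j"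
  by (rule nth_equalityI) (use len bas cCe in \<open>auto simp: nth_swap eq_h\<close>)
lemma eqA2: "0 < i \<Longrightarrow> m = i \<Longrightarrow> swap_pos (swap_pos a i j) 0 m = swap_pos (swap_pos a 0 j) i j"
  by (rule nth_equalityI) (use len bas cCe in \<open>auto simp: nth_swap eq_h\<close>)
lemma eqB: "0 < i \<Longrightarrow> m = j \<Longrightarrow> swap_pos (swap_pos a i j) 0 m = swap_pos (swap_pos a 0 i) i j"
  by (rule nth_equalityI) (use len bas cCe in \<open>auto simp: nth_swap eq_h\<close>)
lemma eqC: "0 < i \<Longrightarrow> m \<noteq> i \<Longrightarrow> m \<noteq> j \<Longrightarrow> swap_pos (swap_pos a i j) 0 m = swap_pos (swap_pos a 0 m) i j"
  by (rule nth_equalityI) (use len bas cCe in \<open>auto simp: nth_swap eq_h\<close>)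
lemma eqD: "i = 0 \<Longrightarrow> m \<noteq> j \<Longrightarrow> swap_pos (swap_pos a i j) 0 m = swap_pos (swap_pos a 0 m) m j"
  by (rule nth_equalityI) (use len bas cCe in \<open>auto simp: nth_swap eq_h\<close>)


lemma dist_a: "distinct a" using is_perm_distinct[OF P] .

lemma cases6_exch:
  assumes "cases6 k a i j m h"
  shows "exch_min h (swap_pos (swap_pos a i j) 0 m) = exf k a i j m"
  using assms unfolding cases6_def
proof (elim disjE conjE)
  assume as: "i = 0" "m \<noteq> j" "k \<le> m" "h = swap_pos a i j"
  have d: "distinct (swap_pos a i j)" using dist_a len bas by (simp add: swap_pos_def)
  show ?thesis using exch_min_swap[OF d, of 0 m] as bas len cm1e bBe unfolding exf_def by (auto simp: min_def)
next
  assume as: "0 < i" "m = i" "a ! 0 < a ! i" "h = swap_pos a 0 i"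
  have d: "distinct h" using dist_a len bas as by (simp add: swap_pos_def)
  show ?thesis using exch_min_swap[OF d, of 0 j] as bas len xy eqA1 unfolding exf_def by (auto simp: min_def eq_h)
next
  assume as: "0 < i" "m = i" "a ! i < a ! 0" "h = swap_pos a 0 j"
  have d: "distinct h" using dist_a len bas as by (simp add: swap_pos_def)
  show ?thesis using exch_min_swap[OF d, of i j] as bas len xy eqA2 unfolding exf_def by (auto simp: min_def eq_h)
next
  assume as: "0 < i" "m = j" "h = swap_pos a 0 i"
  have d: "distinct h" using dist_a len bas as by (simp add: swap_pos_def)
  show ?thesis using exch_min_swap[OF d, of i j] as bas len xy eqB cm1e unfolding exf_def by (auto simp: min_def eq_h)
next
  assume as: "0 < i" "m \<noteq> i" "m \<noteq> j" "h = swap_pos a 0 m"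
  have d: "distinct h" using dist_a len bas as by (simp add: swap_pos_def)
  show ?thesis using exch_min_swap[OF d, of i j] as bas len xy eqC unfolding exf_def by (auto simp: min_def eq_h)
next
  assume as: "i = 0" "m \<noteq> j" "m < k" "h = swap_pos a 0 m"
  have d: "distinct h" using dist_a len bas as by (simp add: swap_pos_def)
  show ?thesis using exch_min_swap[OF d, of m j] as bas len xy eqD unfolding exf_def by (auto simp: min_def eq_h)
qed

lemma cases6_mout:
  assumes "cases6 k a i j m h" "h = swap_pos a 0 mm" "0 < mm" "mm < n"
  shows "mm = mout k a i j m"
proof -
  have h0: "h ! 0 = a ! mm" using assms eq_h by simp
  have inj': "x < n \<Longrightarrow> a ! mm = a ! x \<Longrightarrow> mm = x" for x using inj assms by blast
  show ?thesis using assms(1) unfolding cases6_def mout_def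
    by (elim disjE conjE) (use h0 inj' bas xy in \<open>auto simp: eq_h bBe\<close>)
qed

end


lemma two_cell:
  fixes n k :: nat and a :: "nat list" and i0 j0 i1 j1 m1 m2 :: nat
  assumes P: "is_perm n a" and k1: "1 \<le> k"
    and c0: "i0 < k" "k \<le> j0" "j0 < n" "cov a i0 j0"
    and c1: "i1 < k" "k \<le> j1" "j1 < n" "cov (swap_pos a i0 j0) i1 j1"
    and m2: "0 < m2" "m2 < n" "cov (swap_pos (swap_pos a i0 j0) i1 j1) 0 m2"
    and H2: "Hs n k (swap_pos (swap_pos (swap_pos a i0 j0) i1 j1) 0 m2)"
    and m1c: "cov (swap_pos a i0 j0) 0 m1"
    and m1: "m1 = mout k (swap_pos a i0 j0) i1 j1 m2"
    and inc: "a ! i0 < swap_pos a i0 j0 ! i1"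
  shows "exf k a i0 j0 m1 < exf k (swap_pos a i0 j0) i1 j1 m2"
proof -
  let ?g1 = "swap_pos a i0 j0"
  let ?g2 = "swap_pos ?g1 i1 j1"
  let ?h2 = "swap_pos ?g2 0 m2"
  have len: "length a = n" using P by (simp add: is_perm_def)
  have inj: "p < n \<Longrightarrow> q < n \<Longrightarrow> a ! p = a ! q \<longleftrightarrow> p = q" for p q
    using is_perm_nth_inj[OF P] by blast
  have g1v: "?g1 ! p = (if p = j0 then a ! i0 else if p = i0 then a ! j0 else a ! p)" for p
    using nth_swap[of i0 a j0 p] len c0 by auto
  have g2v: "?g2 ! p = (if p = j1 then ?g1 ! i1 else if p = i1 then ?g1 ! j1 else ?g1 ! p)" for p
    using nth_swap[of i1 ?g1 j1 p] len c1 by auto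
  have h2v: "?h2 ! p = (if p = m2 then ?g2 ! 0 else if p = 0 then ?g2 ! m2 else ?g2 ! p)" for p
    using nth_swap[of 0 ?g2 m2 p] len m2 by auto
  have xy0: "a ! i0 < a ! j0" using c0 by (simp add: cov_def)
  have xy1: "?g1 ! i1 < ?g1 ! j1" using c1 by (simp add: cov_def)
  have j00: "0 < j0" "0 < j1" using k1 c0 c1 by auto
  have F1: "a ! j0 < ?g1 ! i1" if "i0 = 0" "0 < i1"
  proof -
    have e: "?g1 ! i1 = a ! i1" using g1v[of i1] that c0 c1 by auto
    have "\<not> (a ! i0 < a ! i1 \<and> a ! i1 < a ! j0)" using c0 c1 that by (auto simp: cov_def)
    moreover have "a ! i1 \<noteq> a ! j0" using inj[of i1 j0] c0 c1 that by auto
    ultimately show ?thesis using e inc by auto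
  qed
  show ?thesis
  proof (cases "i0 = 0 \<and> k \<le> m1")
    case S0: True
    hence E0: "exf k a i0 j0 m1 = a ! j0" by (simp add: exf_def)
    show ?thesis
    proof (cases "i1 = 0")
      case True
      hence "m1 = (if k \<le> m2 then j1 else m2)" using m1 by (simp add: mout_def)
      hence "k \<le> m2" using S0 by (auto split: if_splits)
      hence "exf k ?g1 i1 j1 m2 = ?g1 ! j1" using True by (simp add: exf_def)
      moreover have "?g1 ! i1 = a ! j0" using g1v[of i1] True S0 j00 by simp
      ultimately show ?thesis using E0 xy1 by simp
    next
      case False
      have "m2 \<noteq> j1"
      proof
        assume "m2 = j1"
        hence "m1 = i1" using m1 False by (auto simp: mout_def)
        thus False using S0 c1 by simp
      qed
      hence "exf k ?g1 i1 j1 m2 = ?g1 ! i1" using False by (simp add: exf_def)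
      thus ?thesis using E0 F1 S0 False by simp
    qed
  next
    case nS0: False
    show ?thesis
    proof (cases "0 < i0 \<and> m1 = j0")
      case B0: True
      hence E0: "exf k a i0 j0 m1 = a ! 0" using nS0 by (simp add: exf_def)
      have "?g1 ! 0 < ?g1 ! j0" using m1c B0 by (simp add: cov_def)
      hence a0: "a ! 0 < a ! i0" using B0 j00 by (simp add: g1v)
      have "\<not> (0 < i1 \<and> m2 = j1)"
      proof
        assume "0 < i1 \<and> m2 = j1"
        hence "m1 = i1" using m1 by (auto simp: mout_def)
        thus False using B0 c0 c1 by simp
      qed
      hence "exf k ?g1 i1 j1 m2 = ?g1 ! i1 \<or> exf k ?g1 i1 j1 m2 = ?g1 ! j1"
        by (auto simp: exf_def)
      thus ?thesis using E0 a0 inc xy1 by auto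
    next
      case nB0: False
      hence E0: "exf k a i0 j0 m1 = a ! i0" using nS0 by (auto simp: exf_def)
      show ?thesis
      proof (cases "0 < i1 \<and> m2 = j1")
        case False
        hence "exf k ?g1 i1 j1 m2 = ?g1 ! i1 \<or> exf k ?g1 i1 j1 m2 = ?g1 ! j1"
          by (auto simp: exf_def)
        thus ?thesis using E0 inc xy1 by auto
      next
        case B1: True
        hence E1: "exf k ?g1 i1 j1 m2 = ?g1 ! 0" by (simp add: exf_def)
        show ?thesis
        proof (cases "i0 = 0")
          case True
          thus ?thesis using g1v[of 0] E0 E1 xy0 j00 by simp
        next
          case False
          hence g10: "?g1 ! 0 = a ! 0" using j00 by (simp add: g1v)
          have jj: "j0 \<noteq> j1"
          proof
            assume "j0 = j1"
            hence "?g1 ! j1 = a ! i0" using g1v[of j1] by simp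
            thus False using xy1 inc by simp
          qed
          have g2j0: "?g2 ! j0 = a ! i0" using g2v[of j0] g1v[of j0] jj c0 c1 by auto
          have g20: "?g2 ! 0 = a ! 0" using g2v[of 0] g1v[of 0] False B1 c0 c1 j00 by auto
          have g2j1: "?g2 ! j1 = ?g1 ! i1" by (simp add: g2v)
          have cv: "?g2 ! 0 < ?g2 ! m2" "\<And>p. 0 < p \<Longrightarrow> p < m2 \<Longrightarrow> \<not> (?g2 ! 0 < ?g2 ! p \<and> ?g2 ! p < ?g2 ! m2)"
            using m2 by (auto simp: cov_def)
          have ne: "a ! i0 \<noteq> a ! 0" using inj[of i0 0] False c0 by auto
          show ?thesis
          proof (cases "j0 < j1")
            case True
            have "\<not> (a ! 0 < a ! i0 \<and> a ! i0 < ?g1 ! i1)"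
              using cv(2)[of j0] True j00 B1 g2j0 g20 g2j1 by simp
            thus ?thesis using E0 E1 g10 ne inc by auto
          next
            case False
            hence lt: "j1 < j0" using jj by simp
            show ?thesis
            proof (rule ccontr)
              assume "\<not> exf k a i0 j0 m1 < exf k ?g1 i1 j1 m2"
              hence "a ! 0 < a ! i0" using E0 E1 g10 ne by auto
              hence "?h2 ! j1 < ?h2 ! j0" using h2v[of j1] h2v[of j0] B1 lt j00 g2j0 g20 by simp
              hence "?h2 ! 0 < ?h2 ! j1" using H2 c1 c0 lt unfolding Hs_def by blast
              hence "?g1 ! i1 < a ! 0" using h2v[of j1] h2v[of 0] B1 j00 g2j1 g20 by simp
              moreover have "a ! 0 < ?g1 ! i1" using cv(1) B1 g20 g2j1 by simp
              ultimately show False by simp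
            qed
          qed
        qed
      qed
    qed
  qed
qed


lemma cell_step:
  assumes A: "is_perm n a" "1 \<le> k" "i < k" "k \<le> j" "j < n" "cov a i j" "0 < m" "m < n" "cov (swap_pos a i j) 0 m"
    and R: "cellrel n k 1 a (swap_pos a i j) (swap_pos (swap_pos a i j) 0 m) h"
    and H: "Hs n k (swap_pos (swap_pos a i j) 0 m)"
  shows "kcovers n 1 a h \<and> kcovers n k h (swap_pos (swap_pos a i j) 0 m) \<and> Hs n k h
    \<and> exch_min h (swap_pos (swap_pos a i j) 0 m) = exf k a i j m
    \<and> (\<forall>mm. h = swap_pos a 0 mm \<longrightarrow> 0 < mm \<longrightarrow> mm < n \<longrightarrow> mm = mout k a i j m)"
proof -
  have c6: "cases6 k a i j m h"
    by (rule cell_cases[OF A]) (use R in \<open>simp add: cellrel_def\<close>)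
  show ?thesis
    using cases6_props[OF A c6 H] cases6_exch[OF A c6] cases6_mout[OF A c6] by blast
qed

lemma exch_cov:
  assumes "is_perm n a" "i < j" "j < n" "cov a i j"
  shows "exch_min a (swap_pos a i j) = a ! i"
proof -
  have "length a = n" using assms by (simp add: is_perm_def)
  thus ?thesis using exch_min_swap[OF is_perm_distinct[OF assms(1)], of i j] assms by (simp add: cov_def)
qed

definition rowok :: "nat \<Rightarrow> nat \<Rightarrow> (nat \<Rightarrow> nat \<Rightarrow> nat list) \<Rightarrow> nat \<Rightarrow> nat \<Rightarrow> bool" where
  "rowok n k G N1 s \<longleftrightarrow> (\<forall>r\<le>N1. is_perm n (G r s)) \<and> (\<forall>r<N1. kcovers n k (G r s) (G (Suc r) s)) \<and>
     (\<forall>r. Suc (Suc r) \<le> N1 \<longrightarrow> exch_min (G r s) (G (Suc r) s) < exch_min (G (Suc r) s) (G (Suc (Suc r)) s))"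

lemma grid_step:
  assumes k1: "1 \<le> k" and row: "rowok n k G N1 s"
    and cells: "\<And>r. r < N1 \<Longrightarrow> cellrel n k 1 (G r s) (G (Suc r) s) (G (Suc r) (Suc s)) (G r (Suc s))"
    and col: "kcovers n 1 (G N1 s) (G N1 (Suc s))" and Hcol: "Hs n k (G N1 (Suc s))"
  shows "rowok n k G N1 (Suc s) \<and> (\<forall>r\<le>N1. kcovers n 1 (G r s) (G r (Suc s)))"
proof -
  have perm: "\<And>r. r \<le> N1 \<Longrightarrow> is_perm n (G r s)" using row by (simp add: rowok_def)
  have rk: "\<And>r. r < N1 \<Longrightarrow> kcovers n k (G r s) (G (Suc r) s)" using row by (simp add: rowok_def)
  have rinc: "\<And>r. Suc (Suc r) \<le> N1 \<Longrightarrow> exch_min (G r s) (G (Suc r) s) < exch_min (G (Suc r) s) (G (Suc (Suc r)) s)"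
    using row by (simp add: rowok_def)
  have "\<forall>r. \<exists>ij. r < N1 \<longrightarrow> fst ij < k \<and> k \<le> snd ij \<and> snd ij < n \<and> G (Suc r) s = swap_pos (G r s) (fst ij) (snd ij) \<and> cov (G r s) (fst ij) (snd ij)"
  proof
    fix r
    show "\<exists>ij. r < N1 \<longrightarrow> fst ij < k \<and> k \<le> snd ij \<and> snd ij < n \<and> G (Suc r) s = swap_pos (G r s) (fst ij) (snd ij) \<and> cov (G r s) (fst ij) (snd ij)"
    proof (cases "r < N1")
      case True
      obtain i j where "i < k" "k \<le> j" "j < n" "G (Suc r) s = swap_pos (G r s) i j" "cov (G r s) i j" "is_perm n (G r s)"
        by (rule kcoversE[OF rk[OF True]])
      thus ?thesis by (intro exI[of _ "(i,j)"]) auto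
    qed auto
  qed
  then have "\<exists>f. \<forall>r. r < N1 \<longrightarrow> fst (f r) < k \<and> k \<le> snd (f r) \<and> snd (f r) < n \<and> G (Suc r) s = swap_pos (G r s) (fst (f r)) (snd (f r)) \<and> cov (G r s) (fst (f r)) (snd (f r))"
    by (rule choice)
  then obtain IJ where IJ0: "\<forall>r. r < N1 \<longrightarrow> fst (IJ r) < k \<and> k \<le> snd (IJ r) \<and> snd (IJ r) < n \<and> G (Suc r) s = swap_pos (G r s) (fst (IJ r)) (snd (IJ r)) \<and> cov (G r s) (fst (IJ r)) (snd (IJ r))"
    by (elim exE)
  have IJ: "fst (IJ r) < k \<and> k \<le> snd (IJ r) \<and> snd (IJ r) < n \<and> G (Suc r) s = swap_pos (G r s) (fst (IJ r)) (snd (IJ r)) \<and> cov (G r s) (fst (IJ r)) (snd (IJ r))"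
    if "r < N1" for r using IJ0 that by blast
  define I where "I r = fst (IJ r)" for r
  define J where "J r = snd (IJ r)" for r
  have IJr: "I r < k" "k \<le> J r" "J r < n" "G (Suc r) s = swap_pos (G r s) (I r) (J r)" "cov (G r s) (I r) (J r)"
    if "r < N1" for r using IJ[OF that] unfolding I_def J_def by auto
  have V: "kcovers n 1 (G r s) (G r (Suc s)) \<and> Hs n k (G r (Suc s))" if "r \<le> N1" for r
  proof -
    have "kcovers n 1 (G (N1 - d) s) (G (N1 - d) (Suc s)) \<and> Hs n k (G (N1 - d) (Suc s))" if "d \<le> N1" for d
      using that
    proof (induction d)
      case 0 thus ?case using col Hcol by simp
    next
      case (Suc d)
      define r where "r = N1 - Suc d"
      have r1: "Suc r = N1 - d" "r < N1" using Suc.prems unfolding r_def by auto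
      have "d \<le> N1" using Suc.prems by simp
      hence IH: "kcovers n 1 (G (Suc r) s) (G (Suc r) (Suc s)) \<and> Hs n k (G (Suc r) (Suc s))"
        unfolding r1(1) by (rule Suc.IH)
      have IHk: "kcovers n 1 (G (Suc r) s) (G (Suc r) (Suc s))" using IH by (rule conjunct1)
      obtain i0 m where m: "i0 < 1" "1 \<le> m" "m < n" "G (Suc r) (Suc s) = swap_pos (G (Suc r) s) i0 m" "cov (G (Suc r) s) i0 m" "is_perm n (G (Suc r) s)"
        by (rule kcoversE[OF IHk])
      have i0: "i0 = 0" using m by simp
      note ij = IJr[OF r1(2)]
      have cv: "cov (swap_pos (G r s) (I r) (J r)) 0 m" using m(5) unfolding i0 ij(4) .
      have c: "G (Suc r) (Suc s) = swap_pos (swap_pos (G r s) (I r) (J r)) 0 m" using m(4) unfolding i0 ij(4) .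
      have R: "cellrel n k 1 (G r s) (swap_pos (G r s) (I r) (J r)) (swap_pos (swap_pos (G r s) (I r) (J r)) 0 m) (G r (Suc s))"
        using cells[OF r1(2)] unfolding ij(4) c .
      have H: "Hs n k (swap_pos (swap_pos (G r s) (I r) (J r)) 0 m)" using IH unfolding c by simp
      have m0: "0 < m" using m(2) by simp
      have pr: "is_perm n (G r s)" using perm r1(2) by simp
      note cs = cell_step[OF pr k1 ij(1) ij(2) ij(3) ij(5) m0 m(3) cv R H]
      have "kcovers n 1 (G r s) (G r (Suc s)) \<and> Hs n k (G r (Suc s))"
        using cs by blast
      thus ?case unfolding r_def .
    qed
    from this[of "N1 - r"] that show ?thesis by simp
  qed
  have "\<forall>r. \<exists>mm. r \<le> N1 \<longrightarrow> 0 < mm \<and> mm < n \<and> G r (Suc s) = swap_pos (G r s) 0 mm \<and> cov (G r s) 0 mm"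
  proof
    fix r
    show "\<exists>mm. r \<le> N1 \<longrightarrow> 0 < mm \<and> mm < n \<and> G r (Suc s) = swap_pos (G r s) 0 mm \<and> cov (G r s) 0 mm"
    proof (cases "r \<le> N1")
      case True
      have Vk: "kcovers n 1 (G r s) (G r (Suc s))" using V[OF True] by (rule conjunct1)
      obtain i0 m where "i0 < 1" "1 \<le> m" "m < n" "G r (Suc s) = swap_pos (G r s) i0 m" "cov (G r s) i0 m" "is_perm n (G r s)"
        by (rule kcoversE[OF Vk])
      thus ?thesis by (intro exI[of _ m]) auto
    qed auto
  qed
  then have "\<exists>f. \<forall>r. r \<le> N1 \<longrightarrow> 0 < f r \<and> f r < n \<and> G r (Suc s) = swap_pos (G r s) 0 (f r) \<and> cov (G r s) 0 (f r)"
    by (rule choice)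
  then obtain M where M0: "\<forall>r. r \<le> N1 \<longrightarrow> 0 < M r \<and> M r < n \<and> G r (Suc s) = swap_pos (G r s) 0 (M r) \<and> cov (G r s) 0 (M r)"
    by (elim exE)
  have Mr: "0 < M r" "M r < n" "G r (Suc s) = swap_pos (G r s) 0 (M r)" "cov (G r s) 0 (M r)"
    if "r \<le> N1" for r using M0 that by blast+
  have CS: "kcovers n k (G r (Suc s)) (G (Suc r) (Suc s)) \<and>
      exch_min (G r (Suc s)) (G (Suc r) (Suc s)) = exf k (G r s) (I r) (J r) (M (Suc r)) \<and>
      M r = mout k (G r s) (I r) (J r) (M (Suc r))" if r0: "r < N1" for r
  proof -
    note ij = IJr[OF r0]
    have r1: "Suc r \<le> N1" using r0 by simp
    note m = Mr[OF r1]
    have cv: "cov (swap_pos (G r s) (I r) (J r)) 0 (M (Suc r))" using m(4) unfolding ij(4) .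
    have c: "G (Suc r) (Suc s) = swap_pos (swap_pos (G r s) (I r) (J r)) 0 (M (Suc r))" using m(3) unfolding ij(4) .
    have R: "cellrel n k 1 (G r s) (swap_pos (G r s) (I r) (J r)) (swap_pos (swap_pos (G r s) (I r) (J r)) 0 (M (Suc r))) (G r (Suc s))"
      using cells[OF r0] unfolding ij(4) c .
    have H: "Hs n k (swap_pos (swap_pos (G r s) (I r) (J r)) 0 (M (Suc r)))" using V[OF r1] unfolding c by simp
    have pr: "is_perm n (G r s)" using perm r0 by simp
    note cs = cell_step[OF pr k1 ij(1) ij(2) ij(3) ij(5) m(1) m(2) cv R H]
    have mr: "M r = mout k (G r s) (I r) (J r) (M (Suc r))"
      using cs Mr[of r] r0 by auto
    show ?thesis using cs mr unfolding c[symmetric] by blast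
  qed
  have inc: "exch_min (G r (Suc s)) (G (Suc r) (Suc s)) < exch_min (G (Suc r) (Suc s)) (G (Suc (Suc r)) (Suc s))"
    if rr: "Suc (Suc r) \<le> N1" for r
  proof -
    have r0: "r < N1" and r1: "Suc r < N1" using rr by auto
    note e0 = IJr[OF r0] and e1 = IJr[OF r1]
    note m1 = Mr[of "Suc r"] and m2 = Mr[of "Suc (Suc r)"]
    have pr: "is_perm n (G r s)" using perm r0 by simp
    have pr1: "is_perm n (G (Suc r) s)" using perm r1 by simp
    have f1: "cov (swap_pos (G r s) (I r) (J r)) (I (Suc r)) (J (Suc r))" using e1(5) unfolding e0(4) .
    have f2: "cov (swap_pos (swap_pos (G r s) (I r) (J r)) (I (Suc r)) (J (Suc r))) 0 (M (Suc (Suc r)))"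
      using m2(4) rr unfolding e1(4) e0(4) by simp
    have f3: "Hs n k (swap_pos (swap_pos (swap_pos (G r s) (I r) (J r)) (I (Suc r)) (J (Suc r))) 0 (M (Suc (Suc r))))"
      using V[OF rr] m2(3)[OF rr] unfolding e1(4) e0(4) by simp
    have f4: "cov (swap_pos (G r s) (I r) (J r)) 0 (M (Suc r))" using m1(4) r1 unfolding e0(4) by simp
    have f5: "M (Suc r) = mout k (swap_pos (G r s) (I r) (J r)) (I (Suc r)) (J (Suc r)) (M (Suc (Suc r)))"
      using CS[OF r1] unfolding e0(4) by simp
    have ex0: "exch_min (G r s) (G (Suc r) s) = G r s ! I r"
      unfolding e0(4) by (rule exch_cov[OF pr _ e0(3) e0(5)]) (use e0 in simp)
    have ex1: "exch_min (G (Suc r) s) (G (Suc (Suc r)) s) = G (Suc r) s ! I (Suc r)"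
      unfolding e1(4) by (rule exch_cov[OF pr1 _ e1(3) e1(5)]) (use e1 in simp)
    have f6: "G r s ! I r < swap_pos (G r s) (I r) (J r) ! I (Suc r)"
      using rinc[OF rr] ex0 ex1 unfolding e0(4) by simp
    have TC: "exf k (G r s) (I r) (J r) (M (Suc r)) < exf k (swap_pos (G r s) (I r) (J r)) (I (Suc r)) (J (Suc r)) (M (Suc (Suc r)))"
      by (rule two_cell[OF pr k1 e0(1) e0(2) e0(3) e0(5) e1(1) e1(2) e1(3) f1 m2(1)[OF rr] m2(2)[OF rr] f2 f3 f4 f5 f6])
    show ?thesis using CS[OF r0] CS[OF r1] TC unfolding e0(4)[symmetric] by simp
  qed
  have permS: "is_perm n (G r (Suc s))" if "r \<le> N1" for r
    using Mr[OF that] perm[OF that] is_perm_swap by simp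
  show ?thesis
    unfolding rowok_def using permS CS inc V by auto
qed

lemma col_Hs:
  assumes k1: "1 \<le> k" and col: "\<And>s. s < N2 \<Longrightarrow> kcovers n 1 (C s) (C (Suc s))" and Hw: "Hs n k (C N2)"
  shows "s \<le> N2 \<Longrightarrow> Hs n k (C s)"
proof -
  have X: "Hs n k (C (N2 - d))" if "d \<le> N2" for d
    using that
  proof (induction d)
    case 0 thus ?case using Hw by simp
  next
    case (Suc d)
    define s where "s = N2 - Suc d"
    have s1: "Suc s = N2 - d" "s < N2" using Suc.prems unfolding s_def by auto
    have IH: "Hs n k (C (Suc s))" unfolding s1(1) by (rule Suc.IH) (use Suc.prems in simp)
    obtain i0 m where m: "i0 < 1" "1 \<le> m" "m < n" "C (Suc s) = swap_pos (C s) i0 m" "cov (C s) i0 m" "is_perm n (C s)"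
      by (rule kcoversE[OF col[OF s1(2)]])
    have "Hs n k (C s)"
      by (rule Hs_back[OF m(6) _ m(3) _ k1]) (use m IH in auto)
    thus ?case unfolding s_def .
  qed
  show "s \<le> N2 \<Longrightarrow> Hs n k (C s)" using X[of "N2 - s"] by simp
qed

lemma grid:
  assumes k1: "1 \<le> k" and row0: "rowok n k G N1 0"
    and cells: "\<And>r s. r < N1 \<Longrightarrow> s < N2 \<Longrightarrow> cellrel n k 1 (G r s) (G (Suc r) s) (G (Suc r) (Suc s)) (G r (Suc s))"
    and col: "\<And>s. s < N2 \<Longrightarrow> kcovers n 1 (G N1 s) (G N1 (Suc s))" and Hw: "Hs n k (G N1 N2)"
  shows "rowok n k G N1 N2 \<and> (\<forall>s<N2. kcovers n 1 (G 0 s) (G 0 (Suc s)))"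
proof -
  have HC: "s \<le> N2 \<Longrightarrow> Hs n k (G N1 s)" for s
    using col_Hs[of k N2 n "\<lambda>s. G N1 s", OF k1 col Hw] by simp
  have "s \<le> N2 \<Longrightarrow> rowok n k G N1 s \<and> (\<forall>s'<s. kcovers n 1 (G 0 s') (G 0 (Suc s')))" for s
  proof (induction s)
    case 0 thus ?case using row0 by simp
  next
    case (Suc s)
    have sl: "s < N2" using Suc.prems by simp
    have IH: "rowok n k G N1 s" "\<forall>s'<s. kcovers n 1 (G 0 s') (G 0 (Suc s'))" using Suc.IH Suc.prems by auto
    have st: "rowok n k G N1 (Suc s) \<and> (\<forall>r\<le>N1. kcovers n 1 (G r s) (G r (Suc s)))"
      by (rule grid_step[OF k1 IH(1) cells[OF _ sl] col[OF sl] HC]) (use Suc.prems in auto)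
    show ?case using st IH(2) by (auto simp: less_Suc_eq)
  qed
  from this[of N2] show ?thesis by simp
qed


definition c1 :: "lab list \<Rightarrow> nat \<Rightarrow> nat" where
  "c1 ts t = length (filter (\<lambda>l. l = L1) (take t ts))"

lemma c1_Suc: "c1 ts (Suc t) = c1 ts t + (if t < length ts \<and> ts ! t = L1 then 1 else 0)"
  unfolding c1_def by (cases "t < length ts") (auto simp: take_Suc_conv_app_nth)

lemma c1_0[simp]: "c1 ts 0 = 0" by (simp add: c1_def)

lemma c1_mono: "t \<le> t' \<Longrightarrow> c1 ts t \<le> c1 ts t'"
proof (induction t' rule: dec_induct)
  case (step m) thus ?case using c1_Suc[of ts m] by simp
qed simp

lemma c1_le: "c1 ts t \<le> t"
  by (induction t) (auto simp: c1_Suc)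

lemma c2_mono: "t \<le> t' \<Longrightarrow> t - c1 ts t \<le> t' - c1 ts t'"
proof (induction t' rule: dec_induct)
  case (step m) thus ?case using c1_Suc[of ts m] c1_le[of ts m] by auto
qed simp

lemma c1_len: "t \<ge> length ts \<Longrightarrow> c1 ts t = c1 ts (length ts)"
  unfolding c1_def by simp

lemma c1_swap:
  assumes "Suc p < length ts" "ts ! p = L1" "ts ! Suc p = L2"
  shows "t \<noteq> Suc p \<Longrightarrow> c1 (ts[p := L2, Suc p := L1]) t = c1 ts t"
    and "c1 (ts[p := L2, Suc p := L1]) (Suc p) = c1 ts p"
    and "c1 ts (Suc p) = Suc (c1 ts p)"
proof -
  let ?ts = "ts[p := L2, Suc p := L1]"
  have le: "t \<le> p \<Longrightarrow> c1 ?ts t = c1 ts t" for t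
  proof (induction t)
    case (Suc t) thus ?case using assms by (simp add: c1_Suc nth_list_update)
  qed simp
  show sp: "c1 ?ts (Suc p) = c1 ts p" using le[of p] assms by (simp add: c1_Suc nth_list_update)
  show sp1: "c1 ts (Suc p) = Suc (c1 ts p)" using assms by (simp add: c1_Suc)
  have ge: "Suc (Suc p) \<le> t \<Longrightarrow> c1 ?ts t = c1 ts t" for t
  proof (induction t rule: dec_induct)
    case base thus ?case using sp sp1 assms by (simp add: c1_Suc nth_list_update)
  next
    case (step m) thus ?case using assms by (simp add: c1_Suc nth_list_update)
  qed
  show "t \<noteq> Suc p \<Longrightarrow> c1 ?ts t = c1 ts t"
    using le ge by (cases "t \<le> p") auto
qed

lemma c1_rep12: "c1 (replicate a L1 @ replicate b L2) t = min t a"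
  unfolding c1_def by (simp add: take_append min_def)

lemma c1_rep21: "c1 (replicate b L2 @ replicate a L1) t = min (t - b) a"
  unfolding c1_def by (simp add: take_append min_def)

definition Inv :: "nat \<Rightarrow> nat \<Rightarrow> nat \<Rightarrow> nat \<Rightarrow> nat list list \<Rightarrow> nat list list \<Rightarrow> nat list list \<times> lab list \<Rightarrow> bool" where
  "Inv n k N1 N2 C1 C2 X \<longleftrightarrow> length (fst X) = length (snd X) + 1 \<and> length (snd X) = N1 + N2 \<and> c1 (snd X) (length (snd X)) = N1 \<and>
   (\<exists>G. (\<forall>r\<le>N1. G r 0 = C1 ! r) \<and> (\<forall>s\<le>N2. G N1 s = C2 ! s) \<and>
        (\<forall>t\<le>length (snd X). fst X ! t = G (c1 (snd X) t) (t - c1 (snd X) t)) \<and>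
        (\<forall>r s. r < N1 \<longrightarrow> s < N2 \<longrightarrow> (\<exists>t\<le>length (snd X). c1 (snd X) t = r \<and> s < t - c1 (snd X) t) \<longrightarrow>
            cellrel n k 1 (G r s) (G (Suc r) s) (G (Suc r) (Suc s)) (G r (Suc s))))"

lemma move_cell:
  assumes "local_move n k 1 (vs, ts) (vs', ts')"
  shows "\<exists>p h. Suc p < length ts \<and> length vs = length ts + 1 \<and> ts ! p = L1 \<and> ts ! Suc p = L2 \<and>
     ts' = ts[p := L2, Suc p := L1] \<and> vs' = vs[Suc p := h] \<and>
     cellrel n k 1 (vs ! p) (vs ! Suc p) (vs ! Suc (Suc p)) h"
proof -
  have "\<exists>p. p + 1 < length ts \<and> length vs = length ts + 1 \<and> ts ! p = L1 \<and> ts ! (p + 1) = L2 \<and>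
    ts' = ts[p := L2, p + 1 := L1] \<and>
       (kcovers n k (vs ! p) (vs ! (p + 1)) \<and> kcovers n 1 (vs ! (p + 1)) (vs ! (p + 2)) \<and>
         ((\<exists>b'. b' \<noteq> vs ! (p + 1) \<and> covers n (vs ! p) b' \<and> covers n b' (vs ! (p + 2)) \<and>
                kcovers n 1 (vs ! p) b' \<and> kcovers n k b' (vs ! (p + 2)) \<and> vs' = vs[p + 1 := b'])
          \<or> ((\<forall>b'. b' \<noteq> vs ! (p + 1) \<and> covers n (vs ! p) b' \<and> covers n b' (vs ! (p + 2)) \<longrightarrow>
                  \<not> (kcovers n 1 (vs ! p) b' \<and> kcovers n k b' (vs ! (p + 2)))) \<and> vs' = vs)))"
    using assms unfolding local_move_def Let_def fst_conv snd_conv .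
  then obtain p where H: "p + 1 < length ts \<and> length vs = length ts + 1 \<and> ts ! p = L1 \<and> ts ! (p + 1) = L2 \<and>
    ts' = ts[p := L2, p + 1 := L1] \<and>
       (kcovers n k (vs ! p) (vs ! (p + 1)) \<and> kcovers n 1 (vs ! (p + 1)) (vs ! (p + 2)) \<and>
         ((\<exists>b'. b' \<noteq> vs ! (p + 1) \<and> covers n (vs ! p) b' \<and> covers n b' (vs ! (p + 2)) \<and>
                kcovers n 1 (vs ! p) b' \<and> kcovers n k b' (vs ! (p + 2)) \<and> vs' = vs[p + 1 := b'])
          \<or> ((\<forall>b'. b' \<noteq> vs ! (p + 1) \<and> covers n (vs ! p) b' \<and> covers n b' (vs ! (p + 2)) \<longrightarrow>
                  \<not> (kcovers n 1 (vs ! p) b' \<and> kcovers n k b' (vs ! (p + 2)))) \<and> vs' = vs)))"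
    by (elim exE)
  note p1 = H[THEN conjunct1] and p2 = H[THEN conjunct2, THEN conjunct1]
    and p3 = H[THEN conjunct2, THEN conjunct2, THEN conjunct1]
    and p4 = H[THEN conjunct2, THEN conjunct2, THEN conjunct2, THEN conjunct1]
    and p5 = H[THEN conjunct2, THEN conjunct2, THEN conjunct2, THEN conjunct2, THEN conjunct1]
    and r = H[THEN conjunct2, THEN conjunct2, THEN conjunct2, THEN conjunct2, THEN conjunct2]
  note k1 = r[THEN conjunct1] and k2 = r[THEN conjunct2, THEN conjunct1] and D = r[THEN conjunct2, THEN conjunct2]
  have e1: "p + 1 = Suc p" and e2: "p + 2 = Suc (Suc p)" by simp_all
  have base: "Suc p < length ts \<and> length vs = length ts + 1 \<and> ts ! p = L1 \<and> ts ! Suc p = L2 \<and> ts' = ts[p := L2, Suc p := L1]"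
    using p1 p2 p3 p4 p5 unfolding e1 by blast
  from D show ?thesis
  proof
    assume "\<exists>b'. b' \<noteq> vs ! (p + 1) \<and> covers n (vs ! p) b' \<and> covers n b' (vs ! (p + 2)) \<and>
                kcovers n 1 (vs ! p) b' \<and> kcovers n k b' (vs ! (p + 2)) \<and> vs' = vs[p + 1 := b']"
    then obtain b' where g: "b' \<noteq> vs ! (p + 1) \<and> covers n (vs ! p) b' \<and> covers n b' (vs ! (p + 2)) \<and>
                kcovers n 1 (vs ! p) b' \<and> kcovers n k b' (vs ! (p + 2))" and v: "vs' = vs[p + 1 := b']"
      by blast
    have "cellrel n k 1 (vs ! p) (vs ! Suc p) (vs ! Suc (Suc p)) b'"
      unfolding cellrel_def good_def using k1 k2 g unfolding e1 e2 by blast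
    thus ?thesis using base v unfolding e1 by blast
  next
    assume st: "(\<forall>b'. b' \<noteq> vs ! (p + 1) \<and> covers n (vs ! p) b' \<and> covers n b' (vs ! (p + 2)) \<longrightarrow>
                  \<not> (kcovers n 1 (vs ! p) b' \<and> kcovers n k b' (vs ! (p + 2)))) \<and> vs' = vs"
    have "cellrel n k 1 (vs ! p) (vs ! Suc p) (vs ! Suc (Suc p)) (vs ! Suc p)"
      unfolding cellrel_def using k1 k2 st[THEN conjunct1] unfolding e1 e2 by blast
    moreover have "vs' = vs[Suc p := vs ! Suc p]" using st by simp
    ultimately show ?thesis using base by blast
  qed
qed

lemma inv_step:
  assumes I: "Inv n k N1 N2 C1 C2 (vs, ts)" and M: "local_move n k 1 (vs, ts) (vs', ts')"
  shows "Inv n k N1 N2 C1 C2 (vs', ts')"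
proof -
  obtain p h where ph: "Suc p < length ts" "length vs = length ts + 1" "ts ! p = L1" "ts ! Suc p = L2"
     "ts' = ts[p := L2, Suc p := L1]" "vs' = vs[Suc p := h]"
     and cr: "cellrel n k 1 (vs ! p) (vs ! Suc p) (vs ! Suc (Suc p)) h"
    using move_cell[OF M] by blast
  have L: "length vs = length ts + 1" "length ts = N1 + N2" "c1 ts (length ts) = N1"
    using I by (auto simp: Inv_def)
  obtain G where B1: "\<forall>r\<le>N1. G r 0 = C1 ! r" and B2: "\<forall>s\<le>N2. G N1 s = C2 ! s"
    and V: "\<forall>t\<le>length ts. vs ! t = G (c1 ts t) (t - c1 ts t)"
    and Cl: "\<forall>r s. r < N1 \<longrightarrow> s < N2 \<longrightarrow> (\<exists>t\<le>length ts. c1 ts t = r \<and> s < t - c1 ts t) \<longrightarrow>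
            cellrel n k 1 (G r s) (G (Suc r) s) (G (Suc r) (Suc s)) (G r (Suc s))"
    using I unfolding Inv_def fst_conv snd_conv by blast
  define r where "r = c1 ts p"
  define s where "s = p - r"
  have rp: "r \<le> p" unfolding r_def by (rule c1_le)
  have cs1: "c1 ts (Suc p) = Suc r" using c1_swap(3)[OF ph(1,3,4)] unfolding r_def .
  have cs2: "c1 ts (Suc (Suc p)) = Suc r" using cs1 ph(1,4) by (simp add: c1_Suc)
  have rN: "r < N1" using c1_mono[of "Suc p" "length ts" ts] ph(1) cs1 L(3) by simp
  have key: "t - c1 ts t \<le> s" if "c1 ts t \<le> r" for t
  proof -
    have "t \<le> p"
    proof (rule ccontr)
      assume "\<not> t \<le> p"
      hence "Suc p \<le> t" by simp
      hence "Suc r \<le> c1 ts t" using c1_mono[of "Suc p" t ts] cs1 by simp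
      thus False using that by simp
    qed
    thus ?thesis using c2_mono[of t p ts] unfolding s_def r_def by simp
  qed
  have va: "vs ! p = G r s" using V ph(1) unfolding r_def s_def by simp
  have vb: "vs ! Suc p = G (Suc r) s" using V ph(1) cs1 rp unfolding s_def by (auto simp: Suc_diff_le)
  have vc: "vs ! Suc (Suc p) = G (Suc r) (Suc s)" using V[rule_format, of "Suc (Suc p)"] ph(1) cs2 rp unfolding s_def by (simp add: Suc_diff_le)
  define G' where "G' = G(r := (G r)(Suc s := h))"
  have G'e: "G' x y = G x y" if "\<not> (x = r \<and> y = Suc s)" for x y using that unfolding G'_def by auto
  have G'h: "G' r (Suc s) = h" unfolding G'_def by simp
  have cs': "c1 ts' t = c1 ts t" if "t \<noteq> Suc p" for t using c1_swap(1)[OF ph(1,3,4) that] ph(5) by simp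
  have cs'1: "c1 ts' (Suc p) = r" using c1_swap(2)[OF ph(1,3,4)] ph(5) unfolding r_def by simp
  have lts: "length ts' = length ts" "length vs' = length vs" using ph by auto
  have corner: "cellrel n k 1 (G' r0 s0) (G' (Suc r0) s0) (G' (Suc r0) (Suc s0)) (G' r0 (Suc s0))
      = cellrel n k 1 (G r0 s0) (G (Suc r0) s0) (G (Suc r0) (Suc s0)) (G r0 (Suc s0))"
    if "c1 ts t0 = r0" "s0 < t0 - c1 ts t0" for r0 s0 t0
  proof (cases "r0 \<le> r")
    case True
    hence "s0 < s" using key[of t0] that by simp
    thus ?thesis using G'e by simp
  next
    case False
    thus ?thesis using G'e by simp
  qed
  have B1': "\<forall>r\<le>N1. G' r 0 = C1 ! r" using B1 G'e by simp
  have B2': "\<forall>s\<le>N2. G' N1 s = C2 ! s" using B2 G'e rN by simp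
  have V': "\<forall>t\<le>length ts'. vs' ! t = G' (c1 ts' t) (t - c1 ts' t)"
  proof (intro allI impI)
    fix t assume t: "t \<le> length ts'"
    show "vs' ! t = G' (c1 ts' t) (t - c1 ts' t)"
    proof (cases "t = Suc p")
      case True
      thus ?thesis using ph(1,2,6) cs'1 G'h rp unfolding s_def by (simp add: Suc_diff_le)
    next
      case False
      have "vs' ! t = vs ! t" using False ph(6) by simp
      also have "\<dots> = G (c1 ts t) (t - c1 ts t)" using V t lts by simp
      also have "\<dots> = G' (c1 ts t) (t - c1 ts t)"
      proof (rule G'e[symmetric], rule notI)
        assume "c1 ts t = r \<and> t - c1 ts t = Suc s"
        thus False using key[of t] by auto
      qed
      finally show ?thesis using cs'[OF False] by simp
    qed
  qed
  have Cl': "\<forall>r0 s0. r0 < N1 \<longrightarrow> s0 < N2 \<longrightarrow> (\<exists>t\<le>length ts'. c1 ts' t = r0 \<and> s0 < t - c1 ts' t) \<longrightarrow>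
            cellrel n k 1 (G' r0 s0) (G' (Suc r0) s0) (G' (Suc r0) (Suc s0)) (G' r0 (Suc s0))"
  proof (intro allI impI)
    fix r0 s0 assume r0: "r0 < N1" and s0: "s0 < N2" and "\<exists>t\<le>length ts'. c1 ts' t = r0 \<and> s0 < t - c1 ts' t"
    then obtain t where t: "t \<le> length ts'" "c1 ts' t = r0" "s0 < t - c1 ts' t" by blast
    show "cellrel n k 1 (G' r0 s0) (G' (Suc r0) s0) (G' (Suc r0) (Suc s0)) (G' r0 (Suc s0))"
    proof (cases "t = Suc p")
      case True
      hence rr: "r0 = r" and ss: "s0 < Suc s" using t cs'1 rp unfolding s_def by (auto simp: Suc_diff_le)
      show ?thesis
      proof (cases "s0 = s")
        case True
        have "G' r s = vs ! p" "G' (Suc r) s = vs ! Suc p" "G' (Suc r) (Suc s) = vs ! Suc (Suc p)"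
          using va vb vc G'e by auto
        thus ?thesis using cr G'h rr True by simp
      next
        case False
        hence "s0 < s" using ss by simp
        hence pr: "c1 ts p = r0 \<and> s0 < p - c1 ts p" using rr unfolding r_def s_def by simp
        have "p \<le> length ts" using ph(1) by simp
        hence "cellrel n k 1 (G r0 s0) (G (Suc r0) s0) (G (Suc r0) (Suc s0)) (G r0 (Suc s0))"
          using Cl r0 s0 pr by blast
        thus ?thesis using corner[of p r0 s0] pr by blast
      qed
    next
      case False
      have pr: "c1 ts t = r0 \<and> s0 < t - c1 ts t" using t cs'[OF False] by simp
      have "t \<le> length ts" using t lts by simp
      hence "cellrel n k 1 (G r0 s0) (G (Suc r0) s0) (G (Suc r0) (Suc s0)) (G r0 (Suc s0))"
        using Cl r0 s0 pr by blast
      thus ?thesis using corner[of t r0 s0] pr by blast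
    qed
  qed
  have L': "length vs' = length ts' + 1" "length ts' = N1 + N2" "c1 ts' (length ts') = N1"
    using L lts cs'[of "length ts"] ph(1) by auto
  show ?thesis unfolding Inv_def fst_conv snd_conv
    using L' B1' B2' V' Cl' by blast
qed

lemma inv_step':
  assumes "Inv n k N1 N2 C1 C2 X" "local_move n k 1 X Y" shows "Inv n k N1 N2 C1 C2 Y"
  using inv_step[of n k N1 N2 C1 C2 "fst X" "snd X" "fst Y" "snd Y"] assms by simp

lemma inv_reach:
  assumes "(local_move n k 1)\<^sup>*\<^sup>* X Y" "Inv n k N1 N2 C1 C2 X" shows "Inv n k N1 N2 C1 C2 Y"
  using assms by (induction rule: rtranclp_induct) (auto intro: inv_step')

lemma inv_init:
  assumes ne: "C1 \<noteq> []" "C2 \<noteq> []" and lh: "last C1 = hd C2"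
  shows "Inv n k (length C1 - 1) (length C2 - 1) C1 C2
           (C1 @ tl C2, replicate (length C1 - 1) L1 @ replicate (length C2 - 1) L2)"
proof -
  define N1 where "N1 = length C1 - 1"
  define N2 where "N2 = length C2 - 1"
  have l1: "length C1 = Suc N1" and l2: "length C2 = Suc N2" using ne unfolding N1_def N2_def by auto
  define G where "G r s = (if s = 0 then C1 ! r else C2 ! s)" for r s
  let ?ts = "replicate N1 L1 @ replicate N2 L2"
  have c: "c1 ?ts t = min t N1" for t by (rule c1_rep12)
  have B2: "\<forall>s\<le>N2. G N1 s = C2 ! s"
  proof (intro allI impI)
    fix s assume "s \<le> N2"
    show "G N1 s = C2 ! s"
    proof (cases "s = 0")
      case True
      have "C1 ! N1 = last C1" using l1 ne by (simp add: last_conv_nth)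
      also have "\<dots> = C2 ! 0" using lh ne by (simp add: hd_conv_nth)
      finally show ?thesis using True by (simp add: G_def)
    qed (simp add: G_def)
  qed
  have V: "\<forall>t\<le>length ?ts. (C1 @ tl C2) ! t = G (c1 ?ts t) (t - c1 ?ts t)"
  proof (intro allI impI)
    fix t assume t: "t \<le> length ?ts"
    show "(C1 @ tl C2) ! t = G (c1 ?ts t) (t - c1 ?ts t)"
    proof (cases "t \<le> N1")
      case True
      thus ?thesis using l1 by (simp add: c G_def nth_append)
    next
      case False
      have "(C1 @ tl C2) ! t = tl C2 ! (t - Suc N1)" using False l1 by (simp add: nth_append)
      also have "\<dots> = C2 ! (t - N1)" using False t l2 ne by (simp add: nth_tl Suc_diff_Suc)
      finally show ?thesis using False by (simp add: c G_def)
    qed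
  qed
  have Cl: "\<forall>r s. r < N1 \<longrightarrow> s < N2 \<longrightarrow> (\<exists>t\<le>length ?ts. c1 ?ts t = r \<and> s < t - c1 ?ts t) \<longrightarrow>
            cellrel n k 1 (G r s) (G (Suc r) s) (G (Suc r) (Suc s)) (G r (Suc s))"
    by (auto simp: c min_def split: if_splits)
  have L: "length (C1 @ tl C2) = length ?ts + 1" "length ?ts = N1 + N2" "c1 ?ts (length ?ts) = N1"
    using l1 l2 by (auto simp: c)
  show ?thesis unfolding N1_def[symmetric] N2_def[symmetric] Inv_def fst_conv snd_conv
    using L B2 V Cl by (intro conjI exI[of _ G]) (auto simp: G_def)
qed

lemma inv_final:
  assumes "Inv n k N1 N2 C1 C2 (vs, replicate N2 L2 @ replicate N1 L1)"
  shows "\<exists>G. (\<forall>r\<le>N1. G r 0 = C1 ! r) \<and> (\<forall>s\<le>N2. G N1 s = C2 ! s) \<and>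
     (\<forall>r s. r < N1 \<longrightarrow> s < N2 \<longrightarrow> cellrel n k 1 (G r s) (G (Suc r) s) (G (Suc r) (Suc s)) (G r (Suc s))) \<and>
     (\<forall>t\<le>N2. vs ! t = G 0 t) \<and> (\<forall>r\<le>N1. vs ! (N2 + r) = G r N2) \<and> length vs = N1 + N2 + 1"
proof -
  let ?ts = "replicate N2 L2 @ replicate N1 L1"
  have c: "c1 ?ts t = min (t - N2) N1" for t by (rule c1_rep21)
  obtain G where B1: "\<forall>r\<le>N1. G r 0 = C1 ! r" and B2: "\<forall>s\<le>N2. G N1 s = C2 ! s"
    and V: "\<forall>t\<le>length ?ts. vs ! t = G (c1 ?ts t) (t - c1 ?ts t)"
    and Cl: "\<forall>r s. r < N1 \<longrightarrow> s < N2 \<longrightarrow> (\<exists>t\<le>length ?ts. c1 ?ts t = r \<and> s < t - c1 ?ts t) \<longrightarrow>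
            cellrel n k 1 (G r s) (G (Suc r) s) (G (Suc r) (Suc s)) (G r (Suc s))"
    and L: "length vs = length ?ts + 1"
    using assms unfolding Inv_def fst_conv snd_conv by blast
  have Cl': "\<forall>r s. r < N1 \<longrightarrow> s < N2 \<longrightarrow> cellrel n k 1 (G r s) (G (Suc r) s) (G (Suc r) (Suc s)) (G r (Suc s))"
  proof (intro allI impI)
    fix r s assume rs: "r < N1" "s < N2"
    have "N2 + r \<le> length ?ts \<and> c1 ?ts (N2 + r) = r \<and> s < (N2 + r) - c1 ?ts (N2 + r)"
      using rs by (simp add: c)
    thus "cellrel n k 1 (G r s) (G (Suc r) s) (G (Suc r) (Suc s)) (G r (Suc s))" using Cl rs by blast
  qed
  have V1: "\<forall>t\<le>N2. vs ! t = G 0 t" using V by (simp add: c)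
  have V2: "\<forall>r\<le>N1. vs ! (N2 + r) = G r N2" using V by (simp add: c)
  show ?thesis using B1 B2 Cl' V1 V2 L by (intro exI[of _ G]) simp
qed


lemma kcovers_perm2: "kcovers n k u w \<Longrightarrow> is_perm n w"
  unfolding kcovers_def by (metis is_perm_def is_perm_swap order.strict_trans1 less_imp_le_nat)

lemma kchain_perm: "kchain n k C \<Longrightarrow> i < length C \<Longrightarrow> is_perm n (C ! i)"
proof (induction i)
  case 0 thus ?case unfolding kchain_def using hd_conv_nth by metis
next
  case (Suc i)
  hence "kcovers n k (C ! i) (C ! Suc i)" unfolding kchain_def by simp
  thus ?case by (rule kcovers_perm2)
qed

lemma exch_1:
  assumes "kcovers n 1 x y" "kcovers n 1 y z"
  shows "exch_min x y < exch_min y z"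
proof -
  obtain i m where a: "i < 1" "1 \<le> m" "m < n" "y = swap_pos x i m" "cov x i m" "is_perm n x"
    by (rule kcoversE[OF assms(1)])
  obtain i' m' where b: "i' < 1" "1 \<le> m'" "m' < n" "z = swap_pos y i' m'" "cov y i' m'" "is_perm n y"
    by (rule kcoversE[OF assms(2)])
  have e1: "exch_min x y = x ! 0" using exch_cov[OF a(6) _ a(3)] a by simp
  have e2: "exch_min y z = y ! 0" using exch_cov[OF b(6) _ b(3)] b by simp
  have "x ! 0 < x ! m" using a by (simp add: cov_def)
  moreover have "y ! 0 = x ! m" using a nth_swap[of 0 x m 0] a(6) by (simp add: is_perm_def)
  ultimately show ?thesis using e1 e2 by simp
qed

lemma Hs_Sdec: "w \<in> S_dec n k \<Longrightarrow> Hs n k w"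
  unfolding S_dec_def Hs_def by (auto dest: less_asym)

theorem lemma5p5:
  fixes n k :: nat and u v w :: "nat list" and C1 C2 C1' C2' :: "nat list list"
  assumes "1 \<le> k" and "k \<le> n - 1"
    and "w \<in> S_dec n k"
    and "kchain n k C1" and "hd C1 = u" and "last C1 = v" and "increasing_chain C1"
    and "kchain n 1 C2" and "hd C2 = v" and "last C2 = w" and "increasing_chain C2"
    and "growth_output n k 1 C1 C2 C2' C1'"
  shows "kchain n 1 C2' \<and> increasing_chain C2' \<and> kchain n k C1' \<and> increasing_chain C1'"
proof -
  note k1 = assms(1) and ch1 = assms(4) and ch2 = assms(8)
  have ne: "C1 \<noteq> []" "C2 \<noteq> []" using ch1 ch2 by (auto simp: kchain_def)
  define N1 where "N1 = length C1 - 1"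
  define N2 where "N2 = length C2 - 1"
  have l1: "length C1 = Suc N1" and l2: "length C2 = Suc N2" using ne unfolding N1_def N2_def by auto
  obtain vs where R: "(local_move n k 1)\<^sup>*\<^sup>* (C1 @ tl C2, replicate N1 L1 @ replicate N2 L2)
             (vs, replicate N2 L2 @ replicate N1 L1)"
    and C2': "C2' = take (length C2) vs" and C1': "C1' = drop (length C2 - 1) vs"
    using assms(12) unfolding growth_output_def N1_def N2_def by blast
  have lh: "last C1 = hd C2" using assms by simp
  have I0: "Inv n k N1 N2 C1 C2 (C1 @ tl C2, replicate N1 L1 @ replicate N2 L2)"
    using inv_init[OF ne lh, of n k] unfolding N1_def N2_def .
  have IF: "Inv n k N1 N2 C1 C2 (vs, replicate N2 L2 @ replicate N1 L1)"
    by (rule inv_reach[OF R I0])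
  obtain G where B1: "\<forall>r\<le>N1. G r 0 = C1 ! r" and B2: "\<forall>s\<le>N2. G N1 s = C2 ! s"
    and Cl: "\<forall>r s. r < N1 \<longrightarrow> s < N2 \<longrightarrow> cellrel n k 1 (G r s) (G (Suc r) s) (G (Suc r) (Suc s)) (G r (Suc s))"
    and V1: "\<forall>t\<le>N2. vs ! t = G 0 t" and V2: "\<forall>r\<le>N1. vs ! (N2 + r) = G r N2"
    and Lv: "length vs = N1 + N2 + 1"
    using inv_final[OF IF] by blast
  have row0: "rowok n k G N1 0"
    unfolding rowok_def
  proof (intro conjI allI impI)
    fix r assume "r \<le> N1" thus "is_perm n (G r 0)" using B1 kchain_perm[OF ch1, of r] l1 by simp
  next
    fix r assume "r < N1" thus "kcovers n k (G r 0) (G (Suc r) 0)" using B1 ch1 l1 unfolding kchain_def by simp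
  next
    fix r assume "Suc (Suc r) \<le> N1"
    thus "exch_min (G r 0) (G (Suc r) 0) < exch_min (G (Suc r) 0) (G (Suc (Suc r)) 0)"
      using B1 assms(7) l1 unfolding increasing_chain_def by simp
  qed
  have col: "kcovers n 1 (G N1 s) (G N1 (Suc s))" if "s < N2" for s
    using B2 ch2 l2 that unfolding kchain_def by simp
  have Hw: "Hs n k (G N1 N2)"
  proof -
    have "G N1 N2 = last C2" using B2 l2 ne by (simp add: last_conv_nth)
    thus ?thesis using Hs_Sdec[OF assms(3)] assms(10) by simp
  qed
  have GR: "rowok n k G N1 N2 \<and> (\<forall>s<N2. kcovers n 1 (G 0 s) (G 0 (Suc s)))"
    by (rule grid[OF k1 row0 _ col Hw]) (use Cl in auto)
  have lC2': "length C2' = Suc N2" using C2' Lv l2 by simp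
  have C2'n: "C2' ! t = G 0 t" if "t \<le> N2" for t using C2' V1 that l2 by simp
  have lC1': "length C1' = Suc N1" using C1' Lv l2 by simp
  have C1'n: "C1' ! r = G r N2" if "r \<le> N1" for r using C1' V2 that l2 Lv by simp
  have p00: "is_perm n (G 0 0)" using B1 kchain_perm[OF ch1, of 0] l1 by simp
  have k2: "kchain n 1 C2'"
    unfolding kchain_def
  proof (intro conjI allI impI)
    show "C2' \<noteq> []" using lC2' by auto
    have "C2' \<noteq> []" using lC2' by auto
    thus "is_perm n (hd C2')" using C2'n[of 0] p00 by (simp add: hd_conv_nth)
    fix i assume "i + 1 < length C2'"
    thus "kcovers n 1 (C2' ! i) (C2' ! (i + 1))" using GR C2'n lC2' by simp
  qed
  have i2: "increasing_chain C2'"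
    unfolding increasing_chain_def
  proof (intro allI impI)
    fix i assume i: "i + 2 < length C2'"
    have "kcovers n 1 (C2' ! i) (C2' ! (i + 1))" "kcovers n 1 (C2' ! (i + 1)) (C2' ! (i + 2))"
      using k2 i unfolding kchain_def by auto
    thus "exch_min (C2' ! i) (C2' ! (i + 1)) < exch_min (C2' ! (i + 1)) (C2' ! (i + 2))" by (rule exch_1)
  qed
  have k3: "kchain n k C1'"
    unfolding kchain_def
  proof (intro conjI allI impI)
    show "C1' \<noteq> []" using lC1' by auto
    have "C1' \<noteq> []" using lC1' by auto
    thus "is_perm n (hd C1')" using C1'n[of 0] GR by (simp add: hd_conv_nth rowok_def)
    fix i assume "i + 1 < length C1'"
    thus "kcovers n k (C1' ! i) (C1' ! (i + 1))" using GR C1'n lC1' by (simp add: rowok_def)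
  qed
  have i3: "increasing_chain C1'"
    unfolding increasing_chain_def
  proof (intro allI impI)
    fix i assume i: "i + 2 < length C1'"
    thus "exch_min (C1' ! i) (C1' ! (i + 1)) < exch_min (C1' ! (i + 1)) (C1' ! (i + 2))"
      using GR C1'n lC1' by (simp add: rowok_def)
  qed
  show ?thesis using k2 i2 k3 i3 by blast
qed


end
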